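(* Let $G$ be a finite group and $H\trianglelefteq G$ an atomically universally definable normal subgroup. Then $\mathrm{EQN\text{-}ID}(G/H)\le_{\mathrm m}^{\mathsf{AC}^0}\mathrm{EQN\text{-}ID}(G)$.
   Context: An expression over a group $G$ is a word over $G\cup\mathcal{X}\cup\mathcal{X}^{-1}$ ($\mathcal{X}$ variables, $\mathcal{X}^{-1}$ formal inverses), evaluated under assignments $\sigma:\mathcal{X}\to G$ with $\sigma(X^{-1})=\sigma(X)^{-1}$, $\sigma(g)=g$. $\mathrm{EQN\text{-}ID}(G)$: given an expression $\alpha$, decide whether $\sigma(\alpha)=1$ for all assignments $\sigma$. A subset $S\subseteq G$ is atomically universally definable if there is an expression $\alpha$ over variables $\{X,Y_1,Y_2,\dots\}$ such that $S=\{g\in G:(\sigma\cup[X\mapsto g])(\alpha)=1\text{ for all }\sigma:\{Y_1,Y_2,\dots\}\to G\}$. $\le_{\mathrm m}^{\mathsf{AC}^0}$ denotes many-one reducibility via functions computable by polynomial-size constant-depth Boolean circuits. *)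

theory Defs
  imports "HOL-Algebra.Algebra"
begin

datatype 'g letter = Cst 'g | Var nat | IVar nat

type_synonym 'g expr = "'g letter list"

definition expr_over :: "('g, 'b) monoid_scheme \<Rightarrow> 'g expr \<Rightarrow> bool" where
  "expr_over G \<alpha> \<longleftrightarrow> (\<forall>g. Cst g \<in> set \<alpha> \<longrightarrow> g \<in> carrier G)"

definition assignment :: "('g, 'b) monoid_scheme \<Rightarrow> (nat \<Rightarrow> 'g) \<Rightarrow> bool" where
  "assignment G \<sigma> \<longleftrightarrow> (\<forall>i. \<sigma> i \<in> carrier G)"

fun eval_letter :: "('g, 'b) monoid_scheme \<Rightarrow> (nat \<Rightarrow> 'g) \<Rightarrow> 'g letter \<Rightarrow> 'g" where
  "eval_letter G \<sigma> (Cst g) = g"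
| "eval_letter G \<sigma> (Var i) = \<sigma> i"
| "eval_letter G \<sigma> (IVar i) = inv\<^bsub>G\<^esub> (\<sigma> i)"

fun eval_expr :: "('g, 'b) monoid_scheme \<Rightarrow> (nat \<Rightarrow> 'g) \<Rightarrow> 'g expr \<Rightarrow> 'g" where
  "eval_expr G \<sigma> [] = \<one>\<^bsub>G\<^esub>"
| "eval_expr G \<sigma> (a # w) = eval_letter G \<sigma> a \<otimes>\<^bsub>G\<^esub> eval_expr G \<sigma> w"

definition EQN_ID :: "('g, 'b) monoid_scheme \<Rightarrow> 'g expr set" where
  "EQN_ID G = {\<alpha>. expr_over G \<alpha> \<and> (\<forall>\<sigma>. assignment G \<sigma> \<longrightarrow> eval_expr G \<sigma> \<alpha> = \<one>\<^bsub>G\<^esub>)}"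

text \<open>Atomic universal definability: X is variable 0, Y_1, Y_2, ... are variables 1, 2, ...\<close>
definition atomically_universally_definable :: "('g, 'b) monoid_scheme \<Rightarrow> 'g set \<Rightarrow> bool" where
  "atomically_universally_definable G S \<longleftrightarrow>
     (\<exists>\<alpha>. expr_over G \<alpha> \<and>
        S = {g \<in> carrier G. \<forall>\<sigma>. assignment G \<sigma> \<longrightarrow> \<sigma> 0 = g \<longrightarrow> eval_expr G \<sigma> \<alpha> = \<one>\<^bsub>G\<^esub>})"

definition elem_code :: "('g, 'b) monoid_scheme \<Rightarrow> 'g \<Rightarrow> nat" where
  "elem_code G = (SOME f. bij_betw f (carrier G) {..<card (carrier G)})"

text \<open>Canonical binary (least significant bit first), made self-delimiting by doubling bits
  and appending the terminator 01.\<close>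
fun nat_bits :: "nat \<Rightarrow> bool list" where
  "nat_bits n = (if n = 0 then [] else odd n # nat_bits (n div 2))"

definition sd_code :: "nat \<Rightarrow> bool list" where
  "sd_code n = concat (map (\<lambda>b. [b, b]) (nat_bits n)) @ [False, True]"

fun letter_num :: "('g, 'b) monoid_scheme \<Rightarrow> 'g letter \<Rightarrow> nat" where
  "letter_num G (Cst g) = 3 * elem_code G g"
| "letter_num G (Var i) = 3 * i + 1"
| "letter_num G (IVar i) = 3 * i + 2"

definition encode_expr :: "('g, 'b) monoid_scheme \<Rightarrow> 'g expr \<Rightarrow> bool list" where
  "encode_expr G \<alpha> = concat (map (\<lambda>a. sd_code (letter_num G a)) \<alpha>)"

definition EQN_ID_lang :: "('g, 'b) monoid_scheme \<Rightarrow> bool list set" where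
  "EQN_ID_lang G = encode_expr G ` EQN_ID G"

text \<open>Unbounded fan-in Boolean circuits (given as formulas; for constant depth, unfolding a
  polynomial-size circuit into a formula keeps the size polynomial).\<close>
datatype circ = Inp nat | Neg circ | Conj "circ list" | Disj "circ list"

fun ceval :: "bool list \<Rightarrow> circ \<Rightarrow> bool" where
  "ceval x (Inp i) = (i < length x \<and> x ! i)"
| "ceval x (Neg c) = (\<not> ceval x c)"
| "ceval x (Conj cs) = (\<forall>c\<in>set cs. ceval x c)"
| "ceval x (Disj cs) = (\<exists>c\<in>set cs. ceval x c)"

fun cdepth :: "circ \<Rightarrow> nat" where
  "cdepth (Inp i) = 0"
| "cdepth (Neg c) = Suc (cdepth c)"
| "cdepth (Conj cs) = Suc (fold max (map cdepth cs) 0)"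
| "cdepth (Disj cs) = Suc (fold max (map cdepth cs) 0)"

fun csize :: "circ \<Rightarrow> nat" where
  "csize (Inp i) = 1"
| "csize (Neg c) = Suc (csize c)"
| "csize (Conj cs) = Suc (sum_list (map csize cs))"
| "csize (Disj cs) = Suc (sum_list (map csize cs))"

definition AC0_computable :: "(bool list \<Rightarrow> bool list) \<Rightarrow> bool" where
  "AC0_computable f \<longleftrightarrow>
     (\<exists>d k. \<exists>C :: nat \<Rightarrow> circ list.
        (\<forall>n. \<forall>c\<in>set (C n). cdepth c \<le> d) \<and>
        (\<forall>n. sum_list (map csize (C n)) \<le> k * (n + 1) ^ k) \<and>
        (\<forall>x. f x = map (ceval x) (C (length x))))"

definition AC0_many_one_reducible :: "bool list set \<Rightarrow> bool list set \<Rightarrow> bool" where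
  "AC0_many_one_reducible A B \<longleftrightarrow>
     (\<exists>f. AC0_computable f \<and> (\<forall>x. x \<in> A \<longleftrightarrow> f x \<in> B))"

end

theory Submission
  imports Defs
begin


declare nat_bits.simps[simp del]

lemma nat_bits_0[simp]: "nat_bits 0 = []" by (simp add: nat_bits.simps)
lemma nat_bits_pos: "n > 0 \<Longrightarrow> nat_bits n = odd n # nat_bits (n div 2)"
  by (simp add: nat_bits.simps)

fun bval :: "bool list \<Rightarrow> nat" where
  "bval [] = 0"
| "bval (b # bs) = (if b then 1 else 0) + 2 * bval bs"

lemma bval_nat_bits[simp]: "bval (nat_bits n) = n"
proof (induction n rule: nat_bits.induct)
  case (1 n)
  then show ?case
    by (cases "n = 0") (auto simp: nat_bits_pos)
qed

lemma nat_bits_bval: "bs = [] \<or> last bs \<Longrightarrow> nat_bits (bval bs) = bs"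
proof (induction bs)
  case Nil then show ?case by simp
next
  case (Cons b bs)
  have pos: "bval (b # bs) > 0"
  proof (cases "bs = []")
    case True then show ?thesis using Cons.prems by auto
  next
    case False
    then have "nat_bits (bval bs) = bs" using Cons by auto
    then have "bval bs > 0" using False by (metis gr0I nat_bits_0)
    then show ?thesis by simp
  qed
  have "bs = [] \<or> last bs" using Cons.prems by (cases bs) auto
  then have ih: "nat_bits (bval bs) = bs" using Cons.IH by blast
  show ?case using pos ih by (simp add: nat_bits_pos)
qed

lemma last_nat_bits: "nat_bits n \<noteq> [] \<Longrightarrow> last (nat_bits n)"
proof (induction n rule: nat_bits.induct)
  case (1 n)
  show ?case
  proof (cases "n = 0")
    case True then show ?thesis using 1 by simp
  next
    case False
    show ?thesis
    proof (cases "n div 2 = 0")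
      case True
      then have "n = 1" using False by auto
      then show ?thesis by (simp add: nat_bits_pos)
    next
      case f2: False
      then have "nat_bits (n div 2) \<noteq> []" by (simp add: nat_bits_pos)
      then show ?thesis using 1 False by (simp add: nat_bits_pos)
    qed
  qed
qed

lemma nat_bits_inj: "nat_bits m = nat_bits n \<Longrightarrow> m = n"
  by (metis bval_nat_bits)

lemma length_nat_bits_le: "length (nat_bits n) \<le> n"
proof (induction n rule: nat_bits.induct)
  case (1 n)
  then show ?case by (cases "n = 0") (auto simp: nat_bits_pos)
qed

lemma length_nat_bits_less: "m < 2 ^ k \<Longrightarrow> length (nat_bits m) \<le> k"
proof (induction m arbitrary: k rule: nat_bits.induct)
  case (1 m)
  show ?case
  proof (cases "m = 0")
    case True then show ?thesis by simp
  next
    case False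
    then obtain k' where k: "k = Suc k'" using 1(2) by (cases k) auto
    have "m div 2 < 2 ^ k'" using 1(2) k by auto
    then show ?thesis using 1(1)[OF False] k False by (simp add: nat_bits_pos)
  qed
qed

lemma less_pow_nat_bits: "n < 2 ^ length (nat_bits n)"
proof (induction n rule: nat_bits.induct)
  case (1 n)
  then show ?case by (cases "n = 0") (auto simp: nat_bits_pos)
qed


abbreviation "cms ns \<equiv> concat (map sd_code ns)"
abbreviation "DT \<equiv> (False, True)"

abbreviation "dsym \<equiv> (\<lambda>b::bool. (b, b))"

definition lsyms :: "nat \<Rightarrow> (bool \<times> bool) list" where
  "lsyms m = map dsym (nat_bits m) @ [DT]"

definition syms :: "nat list \<Rightarrow> (bool \<times> bool) list" where
  "syms ns = concat (map lsyms ns)"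

definition unp :: "(bool \<times> bool) list \<Rightarrow> bool list" where
  "unp s = concat (map (\<lambda>(a,b). [a,b]) s)"

definition prs :: "bool list \<Rightarrow> (bool \<times> bool) list" where
  "prs x = map (\<lambda>j. (x ! (2*j), x ! (2*j+1))) [0..<length x div 2]"

lemma syms_simps[simp]: "syms [] = []" "syms (m # ns) = lsyms m @ syms ns"
  "syms (ns @ ms) = syms ns @ syms ms"
  by (auto simp: syms_def)

lemma unp_simps[simp]: "unp [] = []" "unp (p # s) = fst p # snd p # unp s"
  "unp (s @ t) = unp s @ unp t"
  by (auto simp: unp_def split: prod.splits)

lemma length_unp[simp]: "length (unp s) = 2 * length s"
  by (induction s) auto

lemma unp_nth: "j < length s \<Longrightarrow> unp s ! (2*j) = fst (s ! j) \<and> unp s ! (Suc (2*j)) = snd (s ! j)"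
proof (induction s arbitrary: j)
  case Nil then show ?case by simp
next
  case (Cons p s)
  then show ?case by (cases j) auto
qed

lemma unp_lsyms: "unp (lsyms m) = sd_code m"
proof -
  have "unp (map dsym bs) = concat (map (\<lambda>b. [b, b]) bs)" for bs
    by (induction bs) auto
  then show ?thesis by (simp add: lsyms_def sd_code_def)
qed

lemma cms_unp: "cms ns = unp (syms ns)"
  by (induction ns) (auto simp: unp_lsyms)

lemma length_lsyms[simp]: "length (lsyms m) = Suc (length (nat_bits m))"
  by (simp add: lsyms_def)

lemma length_sd[simp]: "length (sd_code m) = 2 * Suc (length (nat_bits m))"
  by (metis unp_lsyms length_unp length_lsyms)

lemma prs_unp[simp]: "prs (unp s) = s"
  by (rule nth_equalityI) (auto simp: prs_def unp_nth)

lemma unp_prs: "even (length x) \<Longrightarrow> unp (prs x) = x"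
proof (rule nth_equalityI)
  assume e: "even (length x)"
  then show "length (unp (prs x)) = length x" by (simp add: prs_def)
  fix i assume "i < length (unp (prs x))"
  then have i: "i < length x" using e by (simp add: prs_def)
  show "unp (prs x) ! i = x ! i"
  proof (cases "even i")
    case True
    then obtain j where j: "i = 2*j" by blast
    have "j < length (prs x)" using i j e unfolding prs_def by (auto; presburger)
    then show ?thesis using unp_nth[of j "prs x"] j by (simp add: prs_def)
  next
    case False
    then obtain j where j: "i = 2*j+1" using oddE by blast
    have "j < length (prs x)" using i j e unfolding prs_def by (auto; presburger)
    then show ?thesis using unp_nth[of j "prs x"] j by (simp add: prs_def)
  qed
qed

fun good :: "(bool \<times> bool) list \<Rightarrow> bool" where
  "good [] = True"
| "good [a] = (a = DT)"
| "good (a # b # s) = (a \<noteq> (True, False) \<and> \<not> (a = (False, False) \<and> b = DT) \<and> good (b # s))"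

definition goodI :: "(bool \<times> bool) list \<Rightarrow> bool" where "goodI s \<longleftrightarrow> (\<forall>j<length s. s ! j \<noteq> (True, False)) \<and> (s \<noteq> [] \<longrightarrow> s ! (length s - 1) = DT)
   \<and> (\<forall>j. Suc j < length s \<longrightarrow> \<not> (s ! j = (False, False) \<and> s ! Suc j = DT))"

lemma good_idx: "good s \<longleftrightarrow> goodI s"
proof (induction s rule: good.induct)
  case 1 then show ?case by (simp add: goodI_def)
next
  case (2 a) then show ?case by (auto simp: goodI_def)
next
  case (3 a b s)
  show ?case
  proof
    assume g: "good (a # b # s)"
    then have ih: "good (b # s)" by simp
    have gI: "goodI (b # s)" using ih 3 by blast
    have A: "\<forall>j<length (a#b#s). (a#b#s) ! j \<noteq> (True, False)"
    proof (intro allI impI)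
      fix j assume "j < length (a#b#s)"
      then show "(a#b#s) ! j \<noteq> (True, False)" using g gI unfolding goodI_def by (cases j) auto
    qed
    have C: "\<forall>j. Suc j < length (a#b#s) \<longrightarrow> \<not> ((a#b#s) ! j = (False, False) \<and> (a#b#s) ! Suc j = DT)"
    proof (intro allI impI)
      fix j assume "Suc j < length (a#b#s)"
      then show "\<not> ((a#b#s) ! j = (False, False) \<and> (a#b#s) ! Suc j = DT)" using g gI unfolding goodI_def by (cases j) auto
    qed
    have "goodI (b # s)" using ih 3 by blast
    then have "(b # s) ! (length (b # s) - 1) = DT" unfolding goodI_def by blast
    then have B: "(a # b # s) ! (length (a # b # s) - 1) = DT" by simp
    show "goodI (a # b # s)" unfolding goodI_def using A B C by blast
  next
    assume r0: "goodI (a # b # s)"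
    note r = r0[unfolded goodI_def]
    have "goodI (b # s)" unfolding goodI_def
    proof (intro conjI allI impI)
      fix j assume "j < length (b # s)" then show "(b#s) ! j \<noteq> (True, False)" using r by (metis Suc_less_eq length_Cons nth_Cons_Suc)
    next
      assume "b # s \<noteq> []" then show "(b # s) ! (length (b # s) - 1) = DT" using r by auto
    next
      fix j assume "Suc j < length (b # s)" then show "\<not> ((b # s) ! j = (False, False) \<and> (b # s) ! Suc j = DT)"
        using r[THEN conjunct2, THEN conjunct2, rule_format, of "Suc j"] by auto
    qed
    then have "good (b # s)" using 3 by blast
    moreover have "a \<noteq> (True, False)" using r by force
    moreover have "\<not> (a = (False, False) \<and> b = DT)" using r[THEN conjunct2, THEN conjunct2, rule_format, of 0] by auto
    ultimately show "good (a # b # s)" by simp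
  qed
qed

lemma good_Cons_DT: "good (DT # s) = good s"
  by (cases s) auto

lemma good_ConsD: "good (a # s) \<Longrightarrow> good s"
  by (cases s) auto

lemma good_appendD: "good (a @ s) \<Longrightarrow> good s"
  by (induction a) (auto dest: good_ConsD)

lemma good_lsyms_app: "good s \<Longrightarrow> good (lsyms m @ s)"
proof -
  assume g: "good s"
  have "bs = [] \<or> last bs \<Longrightarrow> good (map dsym bs @ DT # s)" for bs
  proof (induction bs)
    case Nil then show ?case using g by (simp add: good_Cons_DT)
  next
    case (Cons b bs)
    show ?case
    proof (cases bs)
      case Nil
      then show ?thesis using Cons.prems g by (auto simp: good_Cons_DT)
    next
      case (Cons c cs)
      then have "good (map dsym bs @ DT # s)" using Cons.IH \<open>bs = c # cs\<close> Cons.prems by auto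
      then show ?thesis using Cons by auto
    qed
  qed
  then show ?thesis using last_nat_bits by (auto simp: lsyms_def)
qed

lemma good_syms: "good (syms ns)"
  by (induction ns) (auto intro: good_lsyms_app)

lemma good_notTF: "good s \<Longrightarrow> (True, False) \<notin> set s"
  by (induction s rule: good.induct) auto

lemma good_parse: "good s \<Longrightarrow> \<exists>ns. s = syms ns"
proof (induction "length s" arbitrary: s rule: less_induct)
  case less
  show ?case
  proof (cases "s = []")
    case True then show ?thesis by (metis syms_simps(1))
  next
    case False
    have "goodI s" using less.prems good_idx by blast
    then have "s ! (length s - 1) = DT" unfolding goodI_def using False by blast
    then have "last s = DT" using False by (simp add: last_conv_nth)
    then have "DT \<in> set s" using False by (metis last_in_set)
    then obtain ds rest where s: "s = ds @ DT # rest" and nd: "DT \<notin> set ds"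
      using split_list_first by metis
    have gr: "good rest" using less.prems s good_appendD good_ConsD by metis
    obtain ns where ns: "rest = syms ns" using less.hyps[of rest] gr s by auto
    have ntf: "(True, False) \<notin> set ds" using good_notTF[OF less.prems] s by auto
    define bs where "bs = map fst ds"
    have dsb: "ds = map dsym bs"
    proof -
      have "\<forall>d\<in>set ds. d = dsym (fst d)"
      proof
        fix d assume "d \<in> set ds"
        then have "d \<noteq> DT" "d \<noteq> (True, False)" using nd ntf by auto
        moreover obtain a b where "d = (a, b)" by fastforce
        ultimately show "d = dsym (fst d)" by (cases a; cases b) auto
      qed
      then show ?thesis unfolding bs_def by (induction ds) auto
    qed
    have lb: "bs = [] \<or> last bs"
    proof (cases "ds = []")
      case True then show ?thesis by (simp add: bs_def)
    next
      case False
      then obtain ds' d where d: "ds = ds' @ [d]" by (metis rev_exhaust)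
      have "good (d # DT # rest)" using less.prems s d good_appendD by (metis append.assoc append_Cons append_Nil)
      then have "d \<noteq> (False, False)" by simp
      moreover have "d \<noteq> (True, False)" "d \<noteq> DT" using ntf nd d by auto
      ultimately have "fst d" by (cases d) auto
      then show ?thesis using d by (simp add: bs_def)
    qed
    have "lsyms (bval bs) = ds @ [DT]" using nat_bits_bval[OF lb] dsb by (simp add: lsyms_def)
    then have "s = syms (bval bs # ns)" using s ns by simp
    then show ?thesis by blast
  qed
qed

lemma lsyms_app_inj: assumes "lsyms m @ s = lsyms m' @ s'" shows "m = m' \<and> s = s'"
proof -
  have "map dsym as @ DT # s = map dsym bs @ DT # s' \<Longrightarrow> as = bs \<and> s = s'" for as bs
  proof (induction as arbitrary: bs)
    case Nil then show ?case by (cases bs) auto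
  next
    case (Cons a as)
    then show ?case by (cases bs) auto
  qed
  moreover have "map dsym (nat_bits m) @ DT # s = map dsym (nat_bits m') @ DT # s'"
    using assms unfolding lsyms_def by simp
  ultimately have "nat_bits m = nat_bits m' \<and> s = s'" by blast
  then show "m = m' \<and> s = s'" using nat_bits_inj by blast
qed

lemma syms_inj: "syms ns = syms ms \<Longrightarrow> ns = ms"
proof (induction ns arbitrary: ms)
  case Nil then show ?case by (cases ms) (auto simp: lsyms_def)
next
  case (Cons n ns)
  show ?case
  proof (cases ms)
    case Nil then show ?thesis using Cons.prems by (simp add: lsyms_def)
  next
    case (Cons m ms')
    then have "lsyms n @ syms ns = lsyms m @ syms ms'" using Cons.prems by simp
    then have "n = m" "syms ns = syms ms'" using lsyms_app_inj by blast+
    then show ?thesis using Cons.IH Cons by simp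
  qed
qed

lemma cms_inj: assumes "cms ns = cms ms" shows "ns = ms"
proof -
  have "prs (unp (syms ns)) = prs (unp (syms ms))" using assms by (simp add: cms_unp)
  then show ?thesis using syms_inj by simp
qed

definition ERR :: "bool list \<Rightarrow> bool" where
  "ERR x \<longleftrightarrow> odd (length x) \<or> \<not> good (prs x)"

lemma ERR_iff: "\<not> ERR x \<longleftrightarrow> (\<exists>ns. x = cms ns)"
proof
  assume "\<not> ERR x"
  then have e: "even (length x)" and g: "good (prs x)" by (auto simp: ERR_def)
  obtain ns where "prs x = syms ns" using good_parse[OF g] by blast
  then have "x = cms ns" using unp_prs[OF e] cms_unp by metis
  then show "\<exists>ns. x = cms ns" by blast
next
  assume "\<exists>ns. x = cms ns"
  then obtain ns where x: "x = cms ns" by blast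
  then show "\<not> ERR x" using good_syms[of ns] by (simp add: ERR_def cms_unp)
qed

lemma last_syms: "u \<noteq> [] \<Longrightarrow> syms u ! (length (syms u) - 1) = DT"
proof (induction u)
  case Nil then show ?case by simp
next
  case (Cons m u)
  show ?case
  proof (cases "u = []")
    case True then show ?thesis by (simp add: lsyms_def nth_append)
  next
    case False
    then have "syms u \<noteq> []" by (cases u) (auto simp: lsyms_def)
    then show ?thesis using Cons False by (simp add: nth_append)
  qed
qed


definition isl :: "(bool \<times> bool) list \<Rightarrow> nat \<Rightarrow> nat \<Rightarrow> bool" where
  "isl s a c \<longleftrightarrow> (a = 0 \<or> s ! (a - 1) = DT) \<and> (\<forall>j<c - 1. fst (s ! (a + j)) = snd (s ! (a + j)))
     \<and> s ! (a + c - 1) = DT"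

lemma lsyms_nth_lt: "i < length (nat_bits m) \<Longrightarrow> lsyms m ! i = dsym (nat_bits m ! i)"
  by (simp add: lsyms_def nth_append)

lemma lsyms_nth_eq: "lsyms m ! length (nat_bits m) = DT"
  by (simp add: lsyms_def nth_append)

lemma ident:
  assumes "s = syms ns" "a + c \<le> length s" "1 \<le> c" "isl s a c"
  shows "\<exists>u m v. ns = u @ m # v \<and> a = length (syms u) \<and> c = Suc (length (nat_bits m))"
  using assms
proof (induction ns arbitrary: a s)
  case Nil then show ?case by simp
next
  case (Cons m ns')
  define lb where "lb = length (nat_bits m)"
  have s: "s = lsyms m @ syms ns'" using Cons.prems by simp
  have isl: "(a = 0 \<or> s ! (a - 1) = DT)" "\<forall>j<c - 1. fst (s ! (a + j)) = snd (s ! (a + j))"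
     "s ! (a + c - 1) = DT" using Cons.prems(4) unfolding isl_def by auto
  show ?case
  proof (cases "a < Suc lb")
    case True
    have a0: "a = 0"
    proof (rule ccontr)
      assume "a \<noteq> 0"
      then have "s ! (a - 1) = DT" using isl by auto
      moreover have "a - 1 < length (lsyms m)" using True by (simp add: lb_def)
      then have "s ! (a - 1) = lsyms m ! (a - 1)"
        using s by (metis nth_append)
      moreover have "lsyms m ! (a - 1) = dsym (nat_bits m ! (a - 1))"
        using True \<open>a \<noteq> 0\<close> lsyms_nth_lt[of "a - 1" m] by (simp add: lb_def)
      ultimately show False by simp
    qed
    have "c - 1 = lb"
    proof (rule ccontr)
      assume ne: "c - 1 \<noteq> lb"
      show False
      proof (cases "c - 1 < lb")
        case True
        then have "s ! (c - 1) = dsym (nat_bits m ! (c - 1))"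
          using s lsyms_nth_lt[of "c - 1" m] by (simp add: nth_append lb_def)
        then show False using isl(3) a0 by simp
      next
        case False
        then have "lb < c - 1" using ne by simp
        then have "fst (s ! lb) = snd (s ! lb)" using isl(2) a0 by auto
        moreover have "s ! lb = DT" using s lsyms_nth_eq[of m] by (simp add: nth_append lb_def)
        ultimately show False by simp
      qed
    qed
    then have "c = Suc lb" using Cons.prems(3) by simp
    then have "m # ns' = [] @ m # ns' \<and> a = length (syms []) \<and> c = Suc (length (nat_bits m))"
      using a0 lb_def by simp
    then show ?thesis by blast
  next
    case False
    define a' where "a' = a - Suc lb"
    have shl: "s ! (a + j) = syms ns' ! (a' + j)" for j
      using False s by (simp add: nth_append a'_def lb_def)
    have "isl (syms ns') a' c"
      unfolding isl_def
    proof (intro conjI allI impI)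
      show "a' = 0 \<or> syms ns' ! (a' - 1) = DT"
      proof (cases "a' = 0")
        case False
        have ge: "\<not> a - 1 < length (lsyms m)" "a - 1 - length (lsyms m) = a' - 1"
          using False \<open>\<not> a < Suc lb\<close> by (auto simp: a'_def lb_def)
        then have "s ! (a - 1) = syms ns' ! (a' - 1)" using s by (metis nth_append)
        then show ?thesis using isl(1) False \<open>\<not> a < Suc lb\<close> by auto
      qed simp
    next
      fix j assume "j < c - 1"
      then show "fst (syms ns' ! (a' + j)) = snd (syms ns' ! (a' + j))" using isl(2) shl by metis
    next
      have "s ! (a + (c - 1)) = DT" using isl(3) Cons.prems(3) by (simp add: add.commute)
      then show "syms ns' ! (a' + c - 1) = DT" using shl[of "c - 1"] Cons.prems(3) by simp
    qed
    moreover have "a' + c \<le> length (syms ns')" using Cons.prems(2) s False by (simp add: a'_def lb_def)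
    ultimately obtain u m' v where "ns' = u @ m' # v" "a' = length (syms u)" "c = Suc (length (nat_bits m'))"
      using Cons.IH[of "syms ns'" a'] Cons.prems(3) by blast
    then have "m # ns' = (m # u) @ m' # v \<and> a = length (syms (m # u)) \<and> c = Suc (length (nat_bits m'))"
      using False by (simp add: a'_def lb_def)
    then show ?thesis by blast
  qed
qed

lemma isl_decomp:
  assumes "ns = u @ m # v"
  shows "isl (syms ns) (length (syms u)) (Suc (length (nat_bits m)))"
proof -
  define a where "a = length (syms u)"
  define lb where "lb = length (nat_bits m)"
  have s: "syms ns = syms u @ lsyms m @ syms v" using assms by simp
  have n1: "syms ns ! (a + j) = lsyms m ! j" if "j \<le> lb" for j
    using that s by (simp add: nth_append a_def lb_def)
  show ?thesis unfolding isl_def a_def[symmetric] lb_def[symmetric]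
  proof (intro conjI allI impI)
    show "a = 0 \<or> syms ns ! (a - 1) = DT"
    proof (cases "u = []")
      case True then show ?thesis by (simp add: a_def)
    next
      case False
      then have "a > 0" using a_def by (cases u) (auto simp: lsyms_def)
      then show ?thesis using last_syms[OF False] s by (simp add: nth_append a_def)
    qed
  next
    fix j assume "j < Suc lb - 1"
    then show "fst (syms ns ! (a + j)) = snd (syms ns ! (a + j))"
      using n1[of j] lsyms_nth_lt[of j m] by (simp add: lb_def)
  next
    show "syms ns ! (a + Suc lb - 1) = DT" using n1[of lb] lsyms_nth_eq[of m] by (simp add: lb_def)
  qed
qed

lemma cover:
  assumes "q < K * length (cms ns)"
  shows "\<exists>u m v. ns = u @ m # v \<and> K * length (cms u) \<le> q \<and> q < K * (length (cms u) + length (sd_code m))"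
  using assms
proof (induction ns arbitrary: q)
  case Nil then show ?case by simp
next
  case (Cons m ns)
  show ?case
  proof (cases "q < K * length (sd_code m)")
    case True
    then have "m # ns = [] @ m # ns \<and> K * length (cms []) \<le> q \<and> q < K * (length (cms []) + length (sd_code m))" by simp
    then show ?thesis by blast
  next
    case False
    define q' where "q' = q - K * length (sd_code m)"
    have "q' < K * length (cms ns)" using Cons.prems False by (simp add: q'_def algebra_simps)
    then obtain u m' v where "ns = u @ m' # v" "K * length (cms u) \<le> q'" "q' < K * (length (cms u) + length (sd_code m'))"
      using Cons.IH by blast
    then have "m # ns = (m # u) @ m' # v \<and> K * length (cms (m # u)) \<le> q \<and> q < K * (length (cms (m # u)) + length (sd_code m'))"
      using False by (simp add: q'_def algebra_simps; linarith)
    then show ?thesis by blast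
  qed
qed


definition constC :: "bool \<Rightarrow> circ" where "constC b = (if b then Conj [] else Disj [])"
definition lit :: "nat \<Rightarrow> bool \<Rightarrow> circ" where "lit i b = (if b then Inp i else Neg (Inp i))"
definition dnf :: "nat list \<Rightarrow> (bool list \<Rightarrow> bool) \<Rightarrow> circ" where
  "dnf is g = Disj (map (\<lambda>vs. Conj (map (\<lambda>(i, v). lit i v) (zip is vs)))
      (filter g (List.n_lists (length is) [True, False])))"
definition dtC :: "nat \<Rightarrow> circ" where "dtC a = Conj [Neg (Inp (2 * a)), Inp (Suc (2 * a))]"
definition eqC :: "nat \<Rightarrow> circ" where
  "eqC i = Disj [Conj [Inp (2 * i), Inp (Suc (2 * i))], Conj [Neg (Inp (2 * i)), Neg (Inp (Suc (2 * i)))]]"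
definition islC :: "nat \<Rightarrow> nat \<Rightarrow> circ" where
  "islC a c = Conj ((if a = 0 then Conj [] else dtC (a - 1)) # map (\<lambda>j. eqC (a + j)) [0..<c - 1] @ [dtC (a + c - 1)])"
definition sdval :: "bool list \<Rightarrow> nat" where
  "sdval bs = bval (map (\<lambda>i. bs ! (2 * i)) [0..<(length bs - 2) div 2])"
definition tbC :: "(nat \<Rightarrow> bool list) \<Rightarrow> nat \<Rightarrow> (nat \<Rightarrow> bool list) \<Rightarrow> nat \<Rightarrow> nat \<Rightarrow> nat \<Rightarrow> circ" where
  "tbC tr Lm P a c r = (if 2 * c \<le> Lm then dnf [2 * a..<2 * a + 2 * c] (\<lambda>bs. tr (sdval bs) ! r)
      else if r < 2 * c then Inp (2 * a + r) else constC (P (2 * c) ! (r - 2 * c)))"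
definition letC :: "(nat \<Rightarrow> bool list) \<Rightarrow> nat \<Rightarrow> nat \<Rightarrow> (nat \<Rightarrow> bool list) \<Rightarrow> nat \<Rightarrow> nat \<Rightarrow> nat \<Rightarrow> nat \<Rightarrow> circ" where
  "letC tr K Lm P n q a c = (if 1 \<le> c \<and> 2 * (a + c) \<le> n \<and> K * (2 * a) \<le> q \<and> q < K * (2 * (a + c))
      then Conj [islC a c, tbC tr Lm P a c (q - K * (2 * a))] else Disj [])"
definition cta :: "(nat \<Rightarrow> bool list) \<Rightarrow> nat \<Rightarrow> nat \<Rightarrow> (nat \<Rightarrow> bool list) \<Rightarrow> nat \<Rightarrow> nat \<Rightarrow> circ" where
  "cta tr K Lm P n q = Disj (concat (map (\<lambda>a. map (\<lambda>c. letC tr K Lm P n q a c) [0..<Suc n]) [0..<n]))"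
definition CTA :: "(nat \<Rightarrow> bool list) \<Rightarrow> nat \<Rightarrow> nat \<Rightarrow> (nat \<Rightarrow> bool list) \<Rightarrow> nat \<Rightarrow> circ list" where
  "CTA tr K Lm P n = map (cta tr K Lm P n) [0..<K * n]"

lemma ceval_constC[simp]: "ceval x (constC b) = b" by (simp add: constC_def)

lemma ceval_dnf:
  assumes "\<forall>i\<in>set is. i < length x"
  shows "ceval x (dnf is g) = g (map (nth x) is)"
proof -
  have litv: "ceval x (lit i v) = (x ! i = v)" if "i < length x" for i v
    using that by (cases v) (auto simp: lit_def)
  have conj: "ceval x (Conj (map (\<lambda>(i, v). lit i v) (zip is vs))) = (vs = map (nth x) is)"
    if "length vs = length is" for vs
  proof
    assume h: "ceval x (Conj (map (\<lambda>(i, v). lit i v) (zip is vs)))"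
    show "vs = map (nth x) is"
    proof (rule nth_equalityI)
      show "length vs = length (map (nth x) is)" using that by simp
      fix k assume k: "k < length vs"
      then have "(is ! k, vs ! k) \<in> set (zip is vs)" using that by (metis in_set_zip fst_conv snd_conv)
      then have "ceval x (lit (is ! k) (vs ! k))" using h by auto
      moreover have "is ! k < length x" using assms k that by simp
      ultimately show "vs ! k = map (nth x) is ! k" using litv k that by auto
    qed
  next
    assume "vs = map (nth x) is"
    then show "ceval x (Conj (map (\<lambda>(i, v). lit i v) (zip is vs)))"
      using assms litv by (auto simp: set_zip)
  qed
  have mem: "map (nth x) is \<in> set (List.n_lists (length is) [True, False])"
    by (auto simp: set_n_lists)
  show ?thesis
  proof
    assume "ceval x (dnf is g)"
    then obtain vs where vs: "vs \<in> set (List.n_lists (length is) [True, False])" "g vs"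
      "ceval x (Conj (map (\<lambda>(i, v). lit i v) (zip is vs)))"
      by (auto simp: dnf_def)
    then have "length vs = length is" by (simp add: set_n_lists)
    then show "g (map (nth x) is)" using conj vs by auto
  next
    assume "g (map (nth x) is)"
    then show "ceval x (dnf is g)" using mem conj[of "map (nth x) is"] by (auto simp: dnf_def)
  qed
qed

context
  fixes s :: "(bool \<times> bool) list" and x :: "bool list"
  assumes xs: "x = unp s"
begin

lemma ceval_Inp_lt: "i < length x \<Longrightarrow> ceval x (Inp i) = x ! i" by simp

lemma ceval_dtC: "a < length s \<Longrightarrow> ceval x (dtC a) = (s ! a = DT)"
  using unp_nth[of a s] xs by (auto simp: dtC_def prod_eq_iff)

lemma ceval_eqC: "a < length s \<Longrightarrow> ceval x (eqC a) = (fst (s ! a) = snd (s ! a))"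
  using unp_nth[of a s] xs by (auto simp: eqC_def)

lemma ceval_islC: "1 \<le> c \<Longrightarrow> a + c \<le> length s \<Longrightarrow> ceval x (islC a c) = isl s a c"
  by (auto simp: islC_def isl_def ceval_dtC ceval_eqC)

end

lemma sdval_sd[simp]: "sdval (sd_code m) = m"
proof -
  have "map (\<lambda>i. sd_code m ! (2 * i)) [0..<(length (sd_code m) - 2) div 2] = nat_bits m"
  proof (rule nth_equalityI)
    show "length (map (\<lambda>i. sd_code m ! (2 * i)) [0..<(length (sd_code m) - 2) div 2]) = length (nat_bits m)" by simp
    fix i assume "i < length (map (\<lambda>i. sd_code m ! (2 * i)) [0..<(length (sd_code m) - 2) div 2])"
    then have i: "i < length (nat_bits m)" by simp
    have "sd_code m ! (2 * i) = fst (lsyms m ! i)" using unp_nth[of i "lsyms m"] i by (simp add: unp_lsyms)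
    then show "map (\<lambda>i. sd_code m ! (2 * i)) [0..<(length (sd_code m) - 2) div 2] ! i = nat_bits m ! i"
      using i lsyms_nth_lt[OF i] by simp
  qed
  then show ?thesis by (simp add: sdval_def)
qed

lemma length_cms_syms: "length (cms u) = 2 * length (syms u)"
  by (simp add: cms_unp)

lemma concat_tr_nth:
  assumes trlen: "\<forall>m. length (tr m) = K * length (sd_code m)"
    and ns: "ns = u @ m # v" and q: "K * length (cms u) \<le> q"
    and that: "q < K * (length (cms u) + length (sd_code m))"
  shows "concat (map tr ns) ! q = tr m ! (q - K * length (cms u))"
proof -
  have lu: "length (concat (map tr u)) = K * length (cms u)"
    using trlen by (induction u) (auto simp: algebra_simps)
  define A where "A = concat (map tr u)"
  define d where "d = q - K * length (cms u)"
  have qd: "q = length A + d" using q lu by (simp add: A_def d_def)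
  have dl: "d < length (tr m)" using that q trlen by (simp add: d_def algebra_simps)
  have "concat (map tr ns) = A @ tr m @ concat (map tr v)" using ns by (simp add: A_def)
  then have "concat (map tr ns) ! q = (tr m @ concat (map tr v)) ! d" using qd by (metis nth_append_length_plus)
  also have "\<dots> = tr m ! d" using dl by (simp add: nth_append)
  finally show ?thesis by (simp add: d_def)
qed

lemma tb_correct:
  assumes trbig: "\<forall>m. Lm < length (sd_code m) \<longrightarrow> tr m = sd_code m @ P (length (sd_code m))"
    and trlen: "\<forall>m. length (tr m) = K * length (sd_code m)"
    and ns: "ns = u @ m # v" and x: "x = cms ns" and a: "a = length (syms u)"
    and c: "c = Suc (length (nat_bits m))" and r: "r < length (tr m)"
  shows "ceval x (tbC tr Lm P a c r) = tr m ! r"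
proof -
  have x2: "x = cms u @ sd_code m @ cms v" using x ns by simp
  have lu: "length (cms u) = 2 * a" using a length_cms_syms by simp
  have lm: "length (sd_code m) = 2 * c" using c by simp
  have nth_m: "x ! (2 * a + i) = sd_code m ! i" if "i < 2 * c" for i
    using that x2 lu lm by (simp add: nth_append)
  have lenx: "2 * a + 2 * c \<le> length x" using x2 lu lm by simp
  show ?thesis
  proof (cases "2 * c \<le> Lm")
    case True
    have "map (nth x) [2 * a..<2 * a + 2 * c] = sd_code m"
    proof (rule nth_equalityI)
      show "length (map (nth x) [2 * a..<2 * a + 2 * c]) = length (sd_code m)" using lm by simp
      fix i assume "i < length (map (nth x) [2 * a..<2 * a + 2 * c])"
      then have "i < 2 * c" by simp
      then show "map (nth x) [2 * a..<2 * a + 2 * c] ! i = sd_code m ! i" using nth_m by simp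
    qed
    moreover have "\<forall>i\<in>set [2 * a..<2 * a + 2 * c]. i < length x" using lenx by auto
    ultimately show ?thesis using True ceval_dnf by (simp add: tbC_def)
  next
    case False
    then have tm: "tr m = sd_code m @ P (2 * c)" using trbig lm by auto
    show ?thesis
    proof (cases "r < 2 * c")
      case True
      then show ?thesis using False tm nth_m lenx lm by (simp add: tbC_def nth_append)
    next
      case f2: False
      then show ?thesis using False tm lm by (simp add: tbC_def nth_append)
    qed
  qed
qed

lemma CTA_correct:
  assumes trbig: "\<forall>m. Lm < length (sd_code m) \<longrightarrow> tr m = sd_code m @ P (length (sd_code m))"
    and trlen: "\<forall>m. length (tr m) = K * length (sd_code m)"
    and x: "x = cms ns"
  shows "map (ceval x) (CTA tr K Lm P (length x)) = concat (map tr ns)"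
proof (rule nth_equalityI)
  define s where "s = syms ns"
  have xs: "x = unp s" using x cms_unp s_def by simp
  have lx: "length x = 2 * length s" using xs by simp
  have lt: "length (concat (map tr ns)) = K * length x"
    using trlen x by (induction ns arbitrary: x) (auto simp: algebra_simps)
  show "length (map (ceval x) (CTA tr K Lm P (length x))) = length (concat (map tr ns))"
    using lt by (simp add: CTA_def)
  fix q assume "q < length (map (ceval x) (CTA tr K Lm P (length x)))"
  then have q: "q < K * length x" by (simp add: CTA_def)
  have lhs: "map (ceval x) (CTA tr K Lm P (length x)) ! q = ceval x (cta tr K Lm P (length x) q)"
    using q by (simp add: CTA_def)
  define n where "n = length x"
  have good_letter: "ceval x (letC tr K Lm P n q a c) \<Longrightarrow> concat (map tr ns) ! q" for a c
  proof -
    assume h: "ceval x (letC tr K Lm P n q a c)"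
    then have g: "1 \<le> c" "2 * (a + c) \<le> n" "K * (2 * a) \<le> q" "q < K * (2 * (a + c))"
      by (auto simp: letC_def split: if_splits)
    then have isl: "isl s a c" and tb: "ceval x (tbC tr Lm P a c (q - K * (2 * a)))"
      using h ceval_islC[OF xs, of c a] lx n_def by (auto simp: letC_def)
    obtain u m v where d: "ns = u @ m # v" "a = length (syms u)" "c = Suc (length (nat_bits m))"
      using ident[OF s_def _ g(1) isl] g(2) lx n_def by auto
    have lu: "length (cms u) = 2 * a" using d length_cms_syms by simp
    have lm: "length (sd_code m) = 2 * c" using d by simp
    have q1: "K * length (cms u) \<le> q" using g lu by simp
    have q2: "q < K * (length (cms u) + length (sd_code m))" using g(4) lu lm by (simp add: algebra_simps)
    have "concat (map tr ns) ! q = tr m ! (q - K * (2 * a))"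
      using concat_tr_nth[OF trlen d(1) q1 q2] lu by simp
    moreover have "ceval x (tbC tr Lm P a c (q - K * (2 * a))) = tr m ! (q - K * (2 * a))"
    proof -
      have e: "K * (2 * (a + c)) = K * (2 * a) + K * (2 * c)" by (simp add: algebra_simps)
      have "length (tr m) = K * (2 * c)" using trlen lm by metis
      then have "q - K * (2 * a) < length (tr m)" using g(3) g(4) e by linarith
      then show ?thesis using tb_correct[OF trbig trlen d(1) x d(2) d(3)] by blast
    qed
    ultimately show ?thesis using tb by simp
  qed
  have "ceval x (cta tr K Lm P n q) = concat (map tr ns) ! q"
  proof
    assume "ceval x (cta tr K Lm P n q)"
    then obtain a c where "ceval x (letC tr K Lm P n q a c)" by (auto simp: cta_def)
    then show "concat (map tr ns) ! q" using good_letter by blast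
  next
    assume t: "concat (map tr ns) ! q"
    obtain u m v where d: "ns = u @ m # v" "K * length (cms u) \<le> q" "q < K * (length (cms u) + length (sd_code m))"
      using cover[of q K ns] q x by auto
    define a where "a = length (syms u)"
    define c where "c = Suc (length (nat_bits m))"
    have lu: "length (cms u) = 2 * a" using a_def length_cms_syms by simp
    have lm: "length (sd_code m) = 2 * c" using c_def by simp
    have lxx: "length x = length (cms u) + length (sd_code m) + length (cms v)" using x d(1) by simp
    have g: "1 \<le> c" "2 * (a + c) \<le> n" "K * (2 * a) \<le> q" "q < K * (2 * (a + c))"
      using lu lm lxx d n_def c_def by (auto simp: algebra_simps)
    have an: "a < n" "c < Suc n" using g by auto
    have isl: "isl s a c" using isl_decomp[OF d(1)] s_def a_def c_def by simp
    have "concat (map tr ns) ! q = tr m ! (q - K * (2 * a))"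
      using concat_tr_nth[OF trlen d(1) d(2) d(3)] lu by simp
    moreover have "ceval x (tbC tr Lm P a c (q - K * (2 * a))) = tr m ! (q - K * (2 * a))"
    proof -
      have e: "K * (2 * (a + c)) = K * (2 * a) + K * (2 * c)" by (simp add: algebra_simps)
      have "length (tr m) = K * (2 * c)" using trlen lm by metis
      then have "q - K * (2 * a) < length (tr m)" using g(3) g(4) e by linarith
      then show ?thesis using tb_correct[OF trbig trlen d(1) x a_def c_def] by blast
    qed
    ultimately have "ceval x (letC tr K Lm P n q a c)"
      using t g isl ceval_islC[OF xs, of c a] lx n_def by (simp add: letC_def)
    moreover have "letC tr K Lm P n q a c \<in> set (concat (map (\<lambda>a. map (letC tr K Lm P n q a) [0..<Suc n]) [0..<n]))"
      using an by (simp del: upt_Suc) (metis atLeastLessThan_iff image_eqI zero_le)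
    ultimately show "ceval x (cta tr K Lm P n q)" unfolding cta_def by (simp only: ceval.simps) blast
  qed
  moreover have "concat (map tr ns) ! q = concat (map tr ns) ! q" ..
  ultimately show "map (ceval x) (CTA tr K Lm P (length x)) ! q = concat (map tr ns) ! q"
    using lhs n_def by simp
qed


lemma fold_max_le: "fold max ys (a::nat) \<le> d \<longleftrightarrow> a \<le> d \<and> (\<forall>y\<in>set ys. y \<le> d)"
  by (induction ys arbitrary: a) auto

lemma cdepth_Disj_le: "(\<forall>c\<in>set cs. cdepth c \<le> d) \<Longrightarrow> cdepth (Disj cs) \<le> Suc d"
  by (simp add: fold_max_le)

lemma cdepth_Conj_le: "(\<forall>c\<in>set cs. cdepth c \<le> d) \<Longrightarrow> cdepth (Conj cs) \<le> Suc d"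
  by (simp add: fold_max_le)

lemma sum_list_le: "(\<forall>x\<in>set xs. f x \<le> (B::nat)) \<Longrightarrow> sum_list (map f xs) \<le> length xs * B"
  by (induction xs) auto

lemma csize_Disj_le: "(\<forall>c\<in>set cs. csize c \<le> B) \<Longrightarrow> csize (Disj cs) \<le> Suc (length cs * B)"
  using sum_list_le[of cs csize B] by simp

lemma csize_Conj_le: "(\<forall>c\<in>set cs. csize c \<le> B) \<Longrightarrow> csize (Conj cs) \<le> Suc (length cs * B)"
  using sum_list_le[of cs csize B] by simp

lemma constC_bounds: "cdepth (constC b) = 1" "csize (constC b) = 1"
  by (auto simp: constC_def)

lemma lit_bounds: "cdepth (lit i b) \<le> 1" "csize (lit i b) \<le> 2"
  by (auto simp: lit_def)

lemma dnf_bounds: "cdepth (dnf is g) \<le> 3" "csize (dnf is g) \<le> Suc (2 ^ length is * Suc (length is * 2))"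
proof -
  have c1: "\<forall>c\<in>set (map (\<lambda>(i, v). lit i v) (zip is vs)). cdepth c \<le> 1" for vs
    using lit_bounds by auto
  have c2: "\<forall>c\<in>set (map (\<lambda>(i, v). lit i v) (zip is vs)). csize c \<le> 2" for vs
    using lit_bounds by auto
  have d: "\<forall>c\<in>set (map (\<lambda>vs. Conj (map (\<lambda>(i, v). lit i v) (zip is vs))) L). cdepth c \<le> 2" for L
    using cdepth_Conj_le[OF c1] by auto
  show "cdepth (dnf is g) \<le> 3" unfolding dnf_def using cdepth_Disj_le[OF d] by simp
  have s: "\<forall>c\<in>set (map (\<lambda>vs. Conj (map (\<lambda>(i, v). lit i v) (zip is vs))) L). csize c \<le> Suc (length is * 2)" for L
  proof
    fix c assume "c \<in> set (map (\<lambda>vs. Conj (map (\<lambda>(i, v). lit i v) (zip is vs))) L)"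
    then obtain vs where c: "c = Conj (map (\<lambda>(i, v). lit i v) (zip is vs))" by auto
    have "csize c \<le> Suc (length (zip is vs) * 2)" using csize_Conj_le[OF c2] c by simp
    also have "\<dots> \<le> Suc (length is * 2)" by simp
    finally show "csize c \<le> Suc (length is * 2)" .
  qed
  define L where "L = filter g (List.n_lists (length is) [True, False])"
  have "length L \<le> 2 ^ length is"
    using length_filter_le[of g "List.n_lists (length is) [True, False]"] by (simp add: L_def length_n_lists numeral_2_eq_2)
  moreover have "csize (dnf is g) \<le> Suc (length L * Suc (length is * 2))"
    unfolding dnf_def L_def[symmetric] using csize_Disj_le[OF s[of L]] by simp
  ultimately show "csize (dnf is g) \<le> Suc (2 ^ length is * Suc (length is * 2))"
    by (meson Suc_le_mono le_trans mult_le_mono1)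
qed

lemma dtC_bounds: "cdepth (dtC a) = 2" "csize (dtC a) = 4"
  by (auto simp: dtC_def)

lemma eqC_bounds: "cdepth (eqC a) = 3" "csize (eqC a) = 9"
  by (auto simp: eqC_def)

lemma islC_bounds: "cdepth (islC a c) \<le> 4" "csize (islC a c) \<le> 9 * c + 9"
proof -
  let ?L = "(if a = 0 then Conj [] else dtC (a - 1)) # map (\<lambda>j. eqC (a + j)) [0..<c - 1] @ [dtC (a + c - 1)]"
  have "\<forall>x\<in>set ?L. cdepth x \<le> 3" by (auto simp: dtC_bounds eqC_bounds)
  then show "cdepth (islC a c) \<le> 4" unfolding islC_def using cdepth_Conj_le by fastforce
  have h: "csize (if a = 0 then Conj [] else dtC (a - 1)) \<le> 4" using dtC_bounds by auto
  have "sum_list (map csize (map (\<lambda>j. eqC (a + j)) [0..<c - 1])) = (c - 1) * 9"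
    by (simp add: comp_def eqC_bounds sum_list_triv)
  moreover have "csize (islC a c) = Suc (csize (if a = 0 then Conj [] else dtC (a - 1))
     + (sum_list (map csize (map (\<lambda>j. eqC (a + j)) [0..<c - 1])) + 4))"
    unfolding islC_def by (simp add: dtC_bounds)
  moreover have "(c - 1) * 9 \<le> 9 * c" by simp
  ultimately show "csize (islC a c) \<le> 9 * c + 9" using h by linarith
qed

definition TB :: "nat \<Rightarrow> nat" where "TB Lm = Suc (2 ^ Lm * Suc (Lm * 2))"

lemma tbC_bounds: "cdepth (tbC tr Lm P a c r) \<le> 3" "csize (tbC tr Lm P a c r) \<le> TB Lm"
proof -
  show "cdepth (tbC tr Lm P a c r) \<le> 3" using dnf_bounds constC_bounds by (auto simp: tbC_def)
  have "Suc (2 ^ (2 * c) * Suc (2 * c * 2)) \<le> TB Lm" if "2 * c \<le> Lm"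
  proof -
    have p: "2 ^ (2 * c) \<le> (2::nat) ^ Lm" using that by (simp add: power_increasing)
    moreover have q: "Suc (2 * c * 2) \<le> Suc (Lm * 2)" using that by simp
    have "2 ^ (2 * c) * Suc (2 * c * 2) \<le> 2 ^ Lm * Suc (Lm * 2)" by (rule mult_le_mono[OF p q])
    then show ?thesis unfolding TB_def by simp
  qed
  moreover have "2 \<le> TB Lm"
  proof -
    have "0 < 2 ^ Lm * Suc (Lm * 2)" by simp
    then show ?thesis unfolding TB_def by linarith
  qed
  ultimately show "csize (tbC tr Lm P a c r) \<le> TB Lm"
    using dnf_bounds(2)[of "[2 * a..<2 * a + 2 * c]"] constC_bounds
    by (auto simp: tbC_def intro: le_trans)
qed

lemma letC_bounds: "cdepth (letC tr K Lm P n q a c) \<le> 5"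
  "c \<le> n \<Longrightarrow> csize (letC tr K Lm P n q a c) \<le> 9 * n + 10 + TB Lm"
proof -
  have "\<forall>x\<in>set [islC a c, tbC tr Lm P a c (q - K * (2 * a))]. cdepth x \<le> 4"
    using islC_bounds(1)[of a c] tbC_bounds(1)[of tr Lm P a c "q - K * (2 * a)"] by auto
  then have "cdepth (Conj [islC a c, tbC tr Lm P a c (q - K * (2 * a))]) \<le> 5"
    using cdepth_Conj_le by fastforce
  then show "cdepth (letC tr K Lm P n q a c) \<le> 5" by (simp add: letC_def)
  assume "c \<le> n"
  then show "csize (letC tr K Lm P n q a c) \<le> 9 * n + 10 + TB Lm"
    using islC_bounds(2)[of a c] tbC_bounds(2)[of tr Lm P a c "q - K * (2 * a)"] by (simp add: letC_def)
qed

lemma cta_bounds: "cdepth (cta tr K Lm P n q) \<le> 6"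
  "csize (cta tr K Lm P n q) \<le> Suc (n * Suc n * (9 * n + 10 + TB Lm))"
proof -
  let ?L = "concat (map (\<lambda>a. map (\<lambda>c. letC tr K Lm P n q a c) [0..<Suc n]) [0..<n])"
  have "\<forall>x\<in>set ?L. cdepth x \<le> 5" using letC_bounds by auto
  then show "cdepth (cta tr K Lm P n q) \<le> 6" unfolding cta_def using cdepth_Disj_le by fastforce
  have "\<forall>x\<in>set ?L. csize x \<le> 9 * n + 10 + TB Lm" using letC_bounds(2) by auto
  moreover have "length ?L = n * Suc n" by (simp del: upt_Suc add: length_concat sum_list_triv comp_def)
  ultimately show "csize (cta tr K Lm P n q) \<le> Suc (n * Suc n * (9 * n + 10 + TB Lm))"
    unfolding cta_def using csize_Disj_le by metis
qed

lemma cta_size_poly: "csize (cta tr K Lm P n q) \<le> (TB Lm + 20) * (n + 1) ^ 3"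
proof -
  have "Suc (n * Suc n * (9 * n + 10 + TB Lm)) \<le> (n+1) * (n+1) * ((TB Lm + 20) * (n + 1))"
  proof -
    have "n * Suc n * (9 * n + 10 + TB Lm) \<le> (n+1) * (n+1) * ((TB Lm + 19) * (n + 1))"
      by (intro mult_le_mono) (auto simp: algebra_simps)
    moreover have "(n+1) * (n+1) * ((TB Lm + 19) * (n + 1)) + 1 \<le> (n+1) * (n+1) * ((TB Lm + 20) * (n + 1))"
      by (simp add: algebra_simps)
    ultimately show ?thesis by linarith
  qed
  also have "\<dots> = (TB Lm + 20) * (n + 1) ^ 3" by (simp add: power3_eq_cube algebra_simps)
  finally show ?thesis using cta_bounds(2) le_trans by blast
qed

definition ERRc :: "nat \<Rightarrow> circ" where
  "ERRc n = Disj ([constC (odd n)] @ map (\<lambda>j. Conj [Inp (2 * j), Neg (Inp (Suc (2 * j)))]) [0..<n div 2]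
     @ [if 2 \<le> n then Neg (dtC (n div 2 - 1)) else constC False]
     @ map (\<lambda>j. Conj [Neg (Inp (2 * j)), Neg (Inp (Suc (2 * j))), dtC (Suc j)]) [0..<n div 2])"

lemma ERRc_bounds: "cdepth (ERRc n) \<le> 4" "csize (ERRc n) \<le> 20 * (n + 1)"
proof -
  define L where "L = [constC (odd n)] @ map (\<lambda>j. Conj [Inp (2 * j), Neg (Inp (Suc (2 * j)))]) [0..<n div 2]
     @ [if 2 \<le> n then Neg (dtC (n div 2 - 1)) else constC False]
     @ map (\<lambda>j. Conj [Neg (Inp (2 * j)), Neg (Inp (Suc (2 * j))), dtC (Suc j)]) [0..<n div 2]"
  have e: "ERRc n = Disj L" by (simp add: ERRc_def L_def)
  have d: "\<forall>x\<in>set L. cdepth x \<le> 3" unfolding L_def by (auto simp: constC_bounds dtC_bounds)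
  show "cdepth (ERRc n) \<le> 4" unfolding e using cdepth_Disj_le[OF d] by simp
  have sz: "\<forall>x\<in>set L. csize x \<le> 9" unfolding L_def by (auto simp: constC_bounds dtC_bounds)
  have "csize (ERRc n) \<le> Suc (length L * 9)" unfolding e by (rule csize_Disj_le[OF sz])
  moreover have "length L \<le> n + 2" unfolding L_def by simp
  then have "length L * 9 \<le> (n + 2) * 9" by (rule mult_le_mono1)
  then have "length L * 9 \<le> 9 * n + 18" by simp
  ultimately show "csize (ERRc n) \<le> 20 * (n + 1)" by simp
qed

lemma ceval_Disj_app: "ceval x (Disj (a @ b)) = (ceval x (Disj a) \<or> ceval x (Disj b))" by auto
lemma ceval_Disj_Cons: "ceval x (Disj (c # cs)) = (ceval x c \<or> ceval x (Disj cs))" by simp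
lemma ceval_Disj_Nil: "ceval x (Disj []) = False" by simp
lemma ceval_Disj_map: "ceval x (Disj (map f xs)) = (\<exists>j\<in>set xs. ceval x (f j))" by simp

lemma bex_upt: "(\<exists>j\<in>set [0..<m]. P j) = (\<exists>j<m. P j)" by auto

lemma ERRc_correct: "ceval x (ERRc (length x)) = ERR x"
proof (cases "odd (length x)")
  case True then show ?thesis by (simp add: ERRc_def ERR_def)
next
  case False
  define n where "n = length x"
  define s where "s = prs x"
  have ls: "length s = n div 2" by (simp add: s_def prs_def n_def)
  have sj: "j < length s \<Longrightarrow> s ! j = (x ! (2 * j), x ! Suc (2 * j))" for j by (simp add: s_def prs_def)
  have ev: "even n" using False n_def by simp
  have ix: "j < length s \<Longrightarrow> 2 * j < n \<and> Suc (2 * j) < n" for j using ls ev by auto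
  have A: "(\<exists>j<n div 2. ceval x (Conj [Inp (2 * j), Neg (Inp (Suc (2 * j)))])) \<longleftrightarrow> (\<exists>j<length s. s ! j = (True, False))"
    using sj ix ls n_def by auto
  have B: "ceval x (if 2 \<le> n then Neg (dtC (n div 2 - 1)) else constC False) \<longleftrightarrow> (s \<noteq> [] \<and> s ! (length s - 1) \<noteq> DT)"
  proof (cases "2 \<le> n")
    case True
    then have "n div 2 - 1 < length s" using ls by simp
    then show ?thesis using True sj[of "n div 2 - 1"] ix[of "n div 2 - 1"] ls n_def
      by (auto simp: dtC_def prod_eq_iff)
  next
    case False
    then have "s = []" using ls ev by auto
    then show ?thesis using False by simp
  qed
  have C: "(\<exists>j<n div 2. ceval x (Conj [Neg (Inp (2 * j)), Neg (Inp (Suc (2 * j))), dtC (Suc j)]))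
       \<longleftrightarrow> (\<exists>j. Suc j < length s \<and> s ! j = (False, False) \<and> s ! Suc j = DT)"
  proof
    assume "\<exists>j<n div 2. ceval x (Conj [Neg (Inp (2 * j)), Neg (Inp (Suc (2 * j))), dtC (Suc j)])"
    then obtain j where j: "j < n div 2" "ceval x (Conj [Neg (Inp (2 * j)), Neg (Inp (Suc (2 * j))), dtC (Suc j)])" by blast
    then have "Suc (Suc (2 * j)) < n" "Suc (2 * Suc j) < n" using n_def by (auto simp: dtC_def)
    then have sj1: "Suc j < length s" using ls ev by auto
    then show "\<exists>j. Suc j < length s \<and> s ! j = (False, False) \<and> s ! Suc j = DT"
      using j sj[of j] sj[of "Suc j"] ix[of j] n_def by (auto simp: dtC_def)
  next
    assume "\<exists>j. Suc j < length s \<and> s ! j = (False, False) \<and> s ! Suc j = DT"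
    then obtain j where j: "Suc j < length s" "s ! j = (False, False)" "s ! Suc j = DT" by blast
    then have "j < n div 2" using ls by simp
    moreover have "ceval x (Conj [Neg (Inp (2 * j)), Neg (Inp (Suc (2 * j))), dtC (Suc j)])"
      using j sj[of j] sj[of "Suc j"] ix[of "Suc j"] n_def by (auto simp: dtC_def)
    ultimately show "\<exists>j<n div 2. ceval x (Conj [Neg (Inp (2 * j)), Neg (Inp (Suc (2 * j))), dtC (Suc j)])" by blast
  qed
  have "ceval x (ERRc n) \<longleftrightarrow> odd n \<or> (\<exists>j\<in>set [0..<n div 2]. ceval x (Conj [Inp (2 * j), Neg (Inp (Suc (2 * j)))]))
     \<or> ceval x (if 2 \<le> n then Neg (dtC (n div 2 - 1)) else constC False)
     \<or> (\<exists>j\<in>set [0..<n div 2]. ceval x (Conj [Neg (Inp (2 * j)), Neg (Inp (Suc (2 * j))), dtC (Suc j)]))"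
    unfolding ERRc_def by (simp only: ceval_Disj_app ceval_Disj_Cons ceval_Disj_map ceval_constC ceval_Disj_Nil simp_thms append_Cons append_Nil)
  also have "\<dots> \<longleftrightarrow> (\<exists>j<n div 2. ceval x (Conj [Inp (2 * j), Neg (Inp (Suc (2 * j)))]))
     \<or> ceval x (if 2 \<le> n then Neg (dtC (n div 2 - 1)) else constC False)
     \<or> (\<exists>j<n div 2. ceval x (Conj [Neg (Inp (2 * j)), Neg (Inp (Suc (2 * j))), dtC (Suc j)]))"
    using ev by (simp only: bex_upt) simp
  also have "\<dots> \<longleftrightarrow> \<not> goodI s" unfolding A B C goodI_def by blast
  also have "\<dots> \<longleftrightarrow> ERR x" using ev n_def by (simp add: ERR_def good_idx s_def)
  finally show ?thesis using n_def by simp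
qed

lemma AC0I:
  assumes d: "\<forall>n. \<forall>c\<in>set (C n). cdepth c \<le> d"
    and l: "\<forall>n. length (C n) \<le> a * (n + 1)"
    and s: "\<forall>n. \<forall>c\<in>set (C n). csize c \<le> b * (n + 1) ^ 3"
  shows "AC0_computable (\<lambda>x. map (ceval x) (C (length x)))"
  unfolding AC0_computable_def
proof (intro exI conjI allI)
  fix n
  show "\<forall>c\<in>set (C n). cdepth c \<le> d" using d by blast
  have sn: "\<forall>c\<in>set (C n). csize c \<le> b * (n + 1) ^ 3" using s by blast
  have "sum_list (map csize (C n)) \<le> length (C n) * (b * (n + 1) ^ 3)" by (rule sum_list_le[OF sn])
  also have "\<dots> \<le> a * (n + 1) * (b * (n + 1) ^ 3)" using l by (intro mult_le_mono1) blast
  also have "\<dots> = (a * b) * ((n + 1) * (n + 1) ^ 3)" by (simp only: ac_simps)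
  also have "\<dots> = (a * b) * (n + 1) ^ Suc 3" by (simp only: power_Suc)
  also have "\<dots> \<le> (a * b + 4) * (n + 1) ^ (a * b + 4)"
  proof (rule mult_le_mono)
    show "a * b \<le> a * b + 4" by simp
    show "(n + 1) ^ Suc 3 \<le> (n + 1) ^ (a * b + 4)" by (rule power_increasing) auto
  qed
  finally show "sum_list (map csize (C n)) \<le> (a * b + 4) * (n + 1) ^ (a * b + 4)" .
next
  fix x show "map (ceval x) (C (length x)) = map (ceval x) (C (length x))" ..
qed


lemma elem_code_bij:
  assumes "finite (carrier M)"
  shows "bij_betw (elem_code M) (carrier M) {..<card (carrier M)}"
proof -
  have "\<exists>f. bij_betw f (carrier M) {..<card (carrier M)}"
    using ex_bij_betw_finite_nat[OF assms] by (simp add: atLeast0LessThan)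
  then show ?thesis unfolding elem_code_def by (rule someI_ex)
qed

lemma mod3[simp]: "(3 * x + 1) mod 3 = (1::nat)" "(3 * x + 2) mod 3 = (2::nat)" "(3 * x + 1) div 3 = (x::nat)"
  "(3 * x + 2) div 3 = (x::nat)" "Suc (3 * x) mod 3 = 1" "Suc (Suc (3 * x)) mod 3 = 2" "Suc (3 * x) div 3 = x" "Suc (Suc (3 * x)) div 3 = x"
  by presburger+

definition dec :: "('g, 'b) monoid_scheme \<Rightarrow> nat \<Rightarrow> 'g letter" where
  "dec M m = (if m mod 3 = 0 then Cst (inv_into (carrier M) (elem_code M) (m div 3))
     else if m mod 3 = 1 then Var (m div 3) else IVar (m div 3))"

definition validM :: "('g, 'b) monoid_scheme \<Rightarrow> nat \<Rightarrow> bool" where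
  "validM M m \<longleftrightarrow> (m mod 3 = 0 \<longrightarrow> m div 3 < card (carrier M))"

lemma encode_cms: "encode_expr M \<alpha> = cms (map (letter_num M) \<alpha>)"
  by (simp add: encode_expr_def comp_def)

lemma letter_num_dec:
  assumes "finite (carrier M)" "validM M m"
  shows "letter_num M (dec M m) = m" "expr_over M [dec M m]"
proof -
  have bij: "bij_betw (elem_code M) (carrier M) {..<card (carrier M)}" using elem_code_bij assms(1) .
  show "letter_num M (dec M m) = m"
  proof (cases "m mod 3 = 0")
    case True
    then have "m div 3 \<in> elem_code M ` carrier M" using assms(2) bij by (auto simp: validM_def bij_betw_def)
    then have "elem_code M (inv_into (carrier M) (elem_code M) (m div 3)) = m div 3" by (rule f_inv_into_f)
    moreover have "3 * (m div 3) = m" using True by (metis mult_div_mod_eq add_0_right)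
    ultimately show ?thesis using True by (simp add: dec_def)
  next
    case False
    then have "m mod 3 = 1 \<or> m mod 3 = 2" by auto
    then show ?thesis using False by (auto simp: dec_def; presburger)
  qed
  show "expr_over M [dec M m]"
  proof (cases "m mod 3 = 0")
    case True
    then have "m div 3 \<in> elem_code M ` carrier M" using assms(2) bij by (auto simp: validM_def bij_betw_def)
    then have "inv_into (carrier M) (elem_code M) (m div 3) \<in> carrier M" by (rule inv_into_into)
    then show ?thesis using True by (simp add: dec_def expr_over_def)
  qed (auto simp: dec_def expr_over_def)
qed

lemma dec_letter_num:
  assumes "finite (carrier M)" "expr_over M [a]"
  shows "dec M (letter_num M a) = a" "validM M (letter_num M a)"
proof -
  have bij: "bij_betw (elem_code M) (carrier M) {..<card (carrier M)}" using elem_code_bij assms(1) .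
  show "dec M (letter_num M a) = a"
  proof (cases a)
    case (Cst g)
    then have "g \<in> carrier M" using assms(2) by (simp add: expr_over_def)
    then show ?thesis using Cst bij by (simp add: dec_def bij_betw_def inv_into_f_f)
  qed (auto simp: dec_def)
  show "validM M (letter_num M a)"
  proof (cases a)
    case (Cst g)
    then have "g \<in> carrier M" using assms(2) by (simp add: expr_over_def)
    then show ?thesis using Cst bij by (auto simp: validM_def bij_betw_def)
  qed (auto simp: validM_def)
qed

lemma expr_over_append[simp]: "expr_over M (a @ b) = (expr_over M a \<and> expr_over M b)"
  by (auto simp: expr_over_def)

lemma expr_over_Cons: "expr_over M (a # b) = (expr_over M [a] \<and> expr_over M b)"
  by (auto simp: expr_over_def)

lemma expr_over_map_dec:
  assumes "finite (carrier M)" "\<forall>m\<in>set ns. validM M m"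
  shows "expr_over M (map (dec M) ns)"
  using assms(2)
proof (induction ns)
  case Nil then show ?case by (simp add: expr_over_def)
next
  case (Cons m ns)
  then show ?case using letter_num_dec(2)[OF assms(1)] expr_over_Cons by (metis list.set_intros(1) list.set_intros(2) list.simps(9))
qed

lemma memb:
  assumes fin: "finite (carrier M)"
  shows "cms ns \<in> EQN_ID_lang M \<longleftrightarrow> (\<forall>m\<in>set ns. validM M m) \<and> map (dec M) ns \<in> EQN_ID M"
proof
  assume "cms ns \<in> EQN_ID_lang M"
  then obtain \<alpha> where a: "\<alpha> \<in> EQN_ID M" "cms ns = cms (map (letter_num M) \<alpha>)"
    by (auto simp: EQN_ID_lang_def encode_cms)
  then have ns: "ns = map (letter_num M) \<alpha>" using cms_inj by blast
  have eo: "expr_over M \<alpha>" using a by (simp add: EQN_ID_def)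
  have each: "\<forall>a\<in>set \<alpha>. expr_over M [a]" using eo by (auto simp: expr_over_def)
  have "\<forall>m\<in>set ns. validM M m" using ns each dec_letter_num(2)[OF fin] by auto
  moreover have "map (dec M) ns = \<alpha>" using ns each dec_letter_num(1)[OF fin]
    by (simp add: map_idI)
  ultimately show "(\<forall>m\<in>set ns. validM M m) \<and> map (dec M) ns \<in> EQN_ID M" using a by simp
next
  assume h: "(\<forall>m\<in>set ns. validM M m) \<and> map (dec M) ns \<in> EQN_ID M"
  have "map (letter_num M) (map (dec M) ns) = ns" using h letter_num_dec(1)[OF fin]
    by (simp add: map_idI)
  then have "cms ns = encode_expr M (map (dec M) ns)" by (simp add: encode_cms)
  then show "cms ns \<in> EQN_ID_lang M" using h by (simp add: EQN_ID_lang_def)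
qed

lemma lang_range: "x \<in> EQN_ID_lang M \<Longrightarrow> \<exists>ns. x = cms ns"
proof -
  assume "x \<in> EQN_ID_lang M"
  then obtain \<alpha> where "x = encode_expr M \<alpha>" by (auto simp: EQN_ID_lang_def)
  then have "x = cms (map (letter_num M) \<alpha>)" by (simp only: encode_cms)
  then show ?thesis by blast
qed

context group
begin

lemma eval_letter_closed:
  "assignment G \<sigma> \<Longrightarrow> expr_over G [a] \<Longrightarrow> eval_letter G \<sigma> a \<in> carrier G"
  by (cases a) (auto simp: assignment_def expr_over_def)

lemma eval_closed:
  "assignment G \<sigma> \<Longrightarrow> expr_over G \<alpha> \<Longrightarrow> eval_expr G \<sigma> \<alpha> \<in> carrier G"
proof (induction \<alpha>)
  case Nil then show ?case by simp
next
  case (Cons a \<alpha>)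
  then show ?case using eval_letter_closed expr_over_Cons by (metis eval_expr.simps(2) m_closed)
qed

lemma eval_append:
  "assignment G \<sigma> \<Longrightarrow> expr_over G \<alpha> \<Longrightarrow> expr_over G \<beta> \<Longrightarrow>
   eval_expr G \<sigma> (\<alpha> @ \<beta>) = eval_expr G \<sigma> \<alpha> \<otimes> eval_expr G \<sigma> \<beta>"
proof (induction \<alpha>)
  case Nil then show ?case using eval_closed by simp
next
  case (Cons a \<alpha>)
  have "expr_over G [a]" "expr_over G \<alpha>" using Cons.prems expr_over_Cons by blast+
  then show ?case using Cons eval_closed eval_letter_closed by (simp add: m_assoc)
qed

lemma eval_pow:
  "assignment G \<sigma> \<Longrightarrow> expr_over G \<alpha> \<Longrightarrow>
   eval_expr G \<sigma> (concat (replicate k \<alpha>)) = eval_expr G \<sigma> \<alpha> [^] k"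
proof (induction k)
  case 0 then show ?case by simp
next
  case (Suc k)
  have eo: "expr_over G (concat (replicate k \<alpha>))" using Suc.prems by (auto simp: expr_over_def)
  have "eval_expr G \<sigma> (concat (replicate (Suc k) \<alpha>)) = eval_expr G \<sigma> \<alpha> \<otimes> eval_expr G \<sigma> \<alpha> [^] k"
    using eval_append[OF Suc.prems(1) Suc.prems(2) eo] Suc by simp
  also have "\<dots> = eval_expr G \<sigma> \<alpha> [^] Suc k"
    by (rule nat_pow_Suc2[OF eval_closed[OF Suc.prems], symmetric])
  finally show ?case .
qed

end

lemma eval_cong:
  "(\<forall>i. (Var i \<in> set \<alpha> \<or> IVar i \<in> set \<alpha>) \<longrightarrow> \<sigma> i = \<sigma>' i) \<Longrightarrow> eval_expr M \<sigma> \<alpha> = eval_expr M \<sigma>' \<alpha>"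
proof (induction \<alpha>)
  case Nil then show ?case by simp
next
  case (Cons a \<alpha>)
  then show ?case by (cases a) auto
qed


definition padnums :: "nat \<Rightarrow> nat list" where
  "padnums t = concat (replicate ((t - 8 * ((2 * t) mod 5)) div 5) [1, 2]) @ concat (replicate ((2 * t) mod 5) [4, 5])"

lemma pad_arith: assumes "(t::nat) \<ge> 32" shows "5 * ((t - 8 * ((2 * t) mod 5)) div 5) + 8 * ((2 * t) mod 5) = t"
proof -
  define b where "b = (2 * t) mod 5"
  have "b < 5" by (simp add: b_def)
  then have le: "8 * b \<le> t" using assms by simp
  have "(8 * b) mod 5 = (8 * (2 * t)) mod 5" by (simp add: b_def mod_mult_right_eq)
  also have "\<dots> = (t + 5 * (3 * t)) mod 5" by (simp add: algebra_simps)
  also have "\<dots> = t mod 5" by (rule mod_mult_self2)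
  finally have "5 dvd (t - 8 * b)" using le by (metis mod_eq_dvd_iff_nat)
  then have "5 * ((t - 8 * b) div 5) = t - 8 * b" by simp
  then show ?thesis using le by (simp add: b_def[symmetric])
qed

lemma cms_append[simp]: "cms (a @ b) = cms a @ cms b" by simp

lemma cms_concat: "cms (concat xss) = concat (map cms xss)"
  by (induction xss) auto

lemma map_concat_replicate: "map f (concat (replicate k L)) = concat (replicate k (map f L))"
  by (induction k) auto

lemma cms_concat_replicate: "cms (concat (replicate k L)) = concat (replicate k (cms L))"
  by (induction k) auto

lemma length_concat_replicate: "length (concat (replicate k L)) = k * length L"
  by (induction k) auto

lemma nb1: "length (nat_bits 1) = 1" by (simp add: nat_bits_pos)
lemma nb2: "length (nat_bits 2) = 2" by (simp add: nat_bits_pos)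
lemma nb4: "length (nat_bits 4) = 3" by (simp add: nat_bits_pos)
lemma nb5: "length (nat_bits 5) = 3" by (simp add: nat_bits_pos)

lemma length_padnums: assumes "t \<ge> 32" shows "length (cms (padnums t)) = 2 * t"
proof -
  have a: "length (cms [1, 2]) = 10" using nb1 nb2 by simp
  have b: "length (cms [4, 5]) = 16" using nb4 nb5 by simp
  have "length (cms (padnums t)) = ((t - 8 * ((2 * t) mod 5)) div 5) * 10 + ((2 * t) mod 5) * 16"
    unfolding padnums_def cms_append cms_concat_replicate length_append length_concat_replicate a b by simp
  also have "\<dots> = 2 * (5 * ((t - 8 * ((2 * t) mod 5)) div 5) + 8 * ((2 * t) mod 5))" by simp
  also have "\<dots> = 2 * t" using pad_arith[OF assms] by simp
  finally show ?thesis .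
qed

lemma set_padnums: "set (padnums t) \<subseteq> {1, 2, 4, 5}"
  by (auto simp: padnums_def)

locale red =
  fixes G :: "('a, 'b) monoid_scheme" and H :: "'a set" and \<beta> :: "'a expr"
  assumes grp: "group G" and fin: "finite (carrier G)" and nrm: "H \<lhd> G"
    and eo: "expr_over G \<beta>"
    and Hdef: "H = {g \<in> carrier G. \<forall>\<sigma>. assignment G \<sigma> \<longrightarrow> \<sigma> 0 = g \<longrightarrow> eval_expr G \<sigma> \<beta> = \<one>\<^bsub>G\<^esub>}"
begin

abbreviation "Q \<equiv> G Mod H"
definition "cG = card (carrier G)"
definition "cQ = card (carrier Q)"
definition "rep c = (SOME g. g \<in> c)"
definition cm :: "nat \<Rightarrow> nat" where
  "cm m = (if m mod 3 = 0 \<and> m < 3 * cG then (if m div 3 < cQ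
      then 3 * elem_code G (rep (inv_into (carrier Q) (elem_code Q) (m div 3))) else 3 * cG) else m)"
definition "KK = 3 * cG + 40"
definition "padn m = padnums ((KK * length (sd_code m) - length (sd_code (cm m))) div 2)"
definition "tr m = sd_code (cm m) @ cms (padn m)"
definition "Lm = 6 * cG + 2"
definition "PP l = cms (padnums ((KK * l - l) div 2))"
definition "trn ns = concat (map (\<lambda>m. cm m # padn m) ns)"

lemma subH: "subgroup H G" using nrm normal_imp_subgroup by blast
lemma finQ: "finite (carrier Q)" using fin carrier_FactGroup by (metis finite_imageI)
lemma cQ_le: "cQ \<le> cG" unfolding cQ_def cG_def carrier_FactGroup using fin card_image_le by blast
lemma cG_pos: "cG \<ge> 1"
proof -
  have "\<one>\<^bsub>G\<^esub> \<in> carrier G" using grp group.is_monoid monoid.one_closed by blast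
  then show ?thesis using fin unfolding cG_def by (metis card_0_eq empty_iff less_one not_le)
qed
lemma bijG: "bij_betw (elem_code G) (carrier G) {..<cG}" using elem_code_bij[OF fin] cG_def by simp
lemma bijQ: "bij_betw (elem_code Q) (carrier Q) {..<cQ}" using elem_code_bij[OF finQ] cQ_def by simp

lemma rep_props:
  assumes "c \<in> carrier Q"
  shows "rep c \<in> carrier G" "H #>\<^bsub>G\<^esub> rep c = c"
proof -
  have "c \<in> (\<lambda>x. H #>\<^bsub>G\<^esub> x) ` carrier G" using assms by (simp only: carrier_FactGroup)
  then obtain a where a: "a \<in> carrier G" "c = H #>\<^bsub>G\<^esub> a" by (rule imageE) simp
  have "a \<in> H #>\<^bsub>G\<^esub> a" by (rule group.rcos_self[OF grp a(1) subH])
  then have "a \<in> c" using a(2) by simp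
  then have r: "rep c \<in> c" unfolding rep_def by (rule someI)
  have "H #>\<^bsub>G\<^esub> a \<subseteq> carrier G"
    by (rule monoid.r_coset_subset_G[OF group.is_monoid[OF grp] subgroup.subset[OF subH] a(1)])
  then show "rep c \<in> carrier G" using r a(2) by blast
  have r2: "rep c \<in> H #>\<^bsub>G\<^esub> a" using r a(2) by simp
  have "H #>\<^bsub>G\<^esub> a = H #>\<^bsub>G\<^esub> rep c" by (rule group.repr_independence[OF grp r2 a(1) subH])
  then show "H #>\<^bsub>G\<^esub> rep c = c" using a(2) by simp
qed

lemma cm_cases: "cm m = m \<or> (cm m \<le> 3 * cG \<and> cm m mod 3 = 0)"
proof (cases "m mod 3 = 0 \<and> m < 3 * cG")
  case True
  show ?thesis
  proof (cases "m div 3 < cQ")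
    case t2: True
    define c where "c = inv_into (carrier Q) (elem_code Q) (m div 3)"
    have "m div 3 \<in> elem_code Q ` carrier Q" using t2 bijQ by (auto simp: bij_betw_def)
    then have "c \<in> carrier Q" unfolding c_def by (rule inv_into_into)
    then have "rep c \<in> carrier G" using rep_props by blast
    then have "elem_code G (rep c) < cG" using bijG by (auto simp: bij_betw_def)
    moreover have "cm m = 3 * elem_code G (rep c)" using True t2 by (simp add: cm_def c_def)
    ultimately show ?thesis by simp
  next
    case False
    then show ?thesis using True False by (simp add: cm_def)
  qed
next
  case False
  have "cm m = m" unfolding cm_def by (simp only: if_not_P[OF False])
  then show ?thesis by simp
qed

lemma trlen: "length (tr m) = KK * length (sd_code m)"
proof -
  define d where "d = KK * length (sd_code m) - length (sd_code (cm m))"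
  have ev: "even (KK * length (sd_code m))" "even (length (sd_code (cm m)))" by simp_all
  have big: "length (sd_code (cm m)) + 64 \<le> KK * length (sd_code m)"
  proof (cases "cm m = m")
    case True
    have "2 \<le> length (sd_code m)" by simp
    then have "KK * length (sd_code m) = length (sd_code m) + (KK - 1) * length (sd_code m)"
      by (simp add: KK_def algebra_simps)
    moreover have "(KK - 1) * length (sd_code m) \<ge> (KK - 1) * 2" using \<open>2 \<le> length (sd_code m)\<close> by simp
    moreover have "(KK - 1) * 2 \<ge> 64" by (simp add: KK_def)
    ultimately show ?thesis unfolding True by linarith
  next
    case False
    then have "cm m \<le> 3 * cG" using cm_cases by blast
    then have "length (nat_bits (cm m)) \<le> 3 * cG" using length_nat_bits_le le_trans by blast
    then have "length (sd_code (cm m)) \<le> 6 * cG + 2" by simp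
    moreover have "KK * length (sd_code m) \<ge> KK * 2" by (rule mult_le_mono2) simp
    moreover have "KK * 2 = 6 * cG + 80" by (simp add: KK_def)
    ultimately show ?thesis by linarith
  qed
  have "even d" using ev by (simp add: d_def)
  then have d2: "2 * (d div 2) = d" by simp
  have "d div 2 \<ge> 32" using big by (simp add: d_def)
  moreover have "padn m = padnums (d div 2)" by (simp only: padn_def d_def)
  ultimately have "length (cms (padn m)) = d" using length_padnums d2 by simp
  then show ?thesis using big by (simp add: tr_def d_def)
qed

lemma trbig: "Lm < length (sd_code m) \<Longrightarrow> tr m = sd_code m @ PP (length (sd_code m))"
proof -
  assume "Lm < length (sd_code m)"
  then have "3 * cG < length (nat_bits m)" by (simp add: Lm_def)
  then have "\<not> m < 3 * cG" using length_nat_bits_le[of m] by linarith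
  then have "cm m = m" by (simp add: cm_def)
  then show ?thesis by (simp add: tr_def PP_def padn_def)
qed

lemma cms_trn: "cms (trn ns) = concat (map tr ns)"
  by (induction ns) (auto simp: trn_def tr_def)

lemma CTA_ok: "x = cms ns \<Longrightarrow> map (ceval x) (CTA tr KK Lm PP (length x)) = cms (trn ns)"
  using CTA_correct[of Lm tr PP KK x ns] trbig trlen cms_trn by simp

definition bp :: "nat \<Rightarrow> nat list \<Rightarrow> 'a letter \<Rightarrow> nat list" where
  "bp n ns a = (case a of Cst g \<Rightarrow> [3 * elem_code G g]
     | Var i \<Rightarrow> if i = 0 then trn ns else [3 * (2 ^ n + i) + 1]
     | IVar i \<Rightarrow> if i = 0 then concat (replicate (cG - 1) (trn ns)) else [3 * (2 ^ n + i) + 2])"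
definition "Out n ns = concat (map (bp n ns) \<beta>) @ concat (replicate cG (trn ns))"
definition cb :: "nat \<Rightarrow> 'a letter \<Rightarrow> circ list" where
  "cb n a = (case a of Cst g \<Rightarrow> map constC (sd_code (3 * elem_code G g))
     | Var i \<Rightarrow> if i = 0 then CTA tr KK Lm PP n else map constC (sd_code (3 * (2 ^ n + i) + 1))
     | IVar i \<Rightarrow> if i = 0 then concat (replicate (cG - 1) (CTA tr KK Lm PP n))
                else map constC (sd_code (3 * (2 ^ n + i) + 2)))"
definition "CC0 n = concat (map (cb n) \<beta>) @ concat (replicate cG (CTA tr KK Lm PP n))"
definition "CC n = map (\<lambda>c. Disj [ERRc n, c]) (CC0 n)"

lemma map_constC: "map (ceval x) (map constC L) = L" by (induction L) auto
lemma map_constC': "map (ceval x \<circ> constC) L = L" by (induction L) auto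
lemma concat_concat_rep: "concat (concat (replicate k L)) = concat (replicate k (concat L))"
  by (induction k) auto

lemma cb_ok: "x = cms ns \<Longrightarrow> map (ceval x) (cb (length x) a) = cms (bp (length x) ns a)"
  by (cases a) (auto simp: cb_def bp_def map_constC map_constC' CTA_ok map_concat_replicate concat_concat_rep)

lemma CC0_ok:
  assumes x: "x = cms ns"
  shows "map (ceval x) (CC0 (length x)) = cms (Out (length x) ns)"
proof -
  have "map (ceval x) (concat (map (cb (length x)) \<beta>)) = concat (map (\<lambda>a. map (ceval x) (cb (length x) a)) \<beta>)"
    by (simp add: map_concat comp_def)
  also have "\<dots> = concat (map (\<lambda>a. cms (bp (length x) ns a)) \<beta>)" using cb_ok[OF x] by simp
  also have "\<dots> = cms (concat (map (bp (length x) ns) \<beta>))" by (simp add: cms_concat comp_def)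
  finally have a: "map (ceval x) (concat (map (cb (length x)) \<beta>)) = cms (concat (map (bp (length x) ns) \<beta>))" .
  show ?thesis unfolding CC0_def Out_def map_append cms_append a
    by (simp add: map_concat_replicate concat_concat_rep CTA_ok[OF x])
qed

lemma CC_ok:
  assumes x: "x = cms ns"
  shows "map (ceval x) (CC (length x)) = cms (Out (length x) ns)"
proof -
  have "\<not> ceval x (ERRc (length x))" using ERRc_correct ERR_iff x by blast
  then have "map (ceval x) (CC (length x)) = map (ceval x) (CC0 (length x))" by (simp add: CC_def)
  then show ?thesis using CC0_ok[OF x] by simp
qed

lemma CC_err:
  assumes "ERR x"
  shows "map (ceval x) (CC (length x)) = replicate (length (CC0 (length x))) True"
proof -
  have "ceval x (ERRc (length x))" using ERRc_correct assms by blast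
  then show ?thesis by (simp add: CC_def map_replicate_const[symmetric] del: map_replicate_const)
qed

lemma length_CTA: "length (CTA tr KK Lm PP n) = KK * n" by (simp add: CTA_def)

lemma CC0_len_pos: "1 \<le> n \<Longrightarrow> 1 \<le> length (CC0 n)"
proof -
  assume n: "1 \<le> n"
  have "length (CC0 n) \<ge> cG * (KK * n)" by (simp add: CC0_def length_concat_replicate length_CTA)
  moreover have "1 \<le> cG * (KK * n)" using cG_pos n by (simp add: KK_def)
  ultimately show ?thesis by linarith
qed

definition "BB = TB Lm + 20"

lemma set_cb: "c \<in> set (cb n a) \<Longrightarrow> (\<exists>b. c = constC b) \<or> c \<in> set (CTA tr KK Lm PP n)"
  by (cases a) (auto simp: cb_def split: if_splits)

lemma CC0_elem: "c \<in> set (CC0 n) \<Longrightarrow> cdepth c \<le> 6 \<and> csize c \<le> BB * (n + 1) ^ 3"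
proof -
  assume "c \<in> set (CC0 n)"
  then have "(\<exists>b. c = constC b) \<or> c \<in> set (CTA tr KK Lm PP n)"
    using set_cb by (auto simp: CC0_def)
  moreover have "1 \<le> BB * (n + 1) ^ 3" by (simp add: BB_def)
  ultimately show ?thesis
    using constC_bounds cta_bounds(1) cta_size_poly by (auto simp: CTA_def BB_def)
qed

lemma CC_depth: "\<forall>c\<in>set (CC n). cdepth c \<le> 7"
proof
  fix c assume "c \<in> set (CC n)"
  then obtain c0 where c: "c = Disj [ERRc n, c0]" "c0 \<in> set (CC0 n)" by (auto simp: CC_def)
  have "cdepth (ERRc n) \<le> 4" by (rule ERRc_bounds(1))
  then have "\<forall>y\<in>set [ERRc n, c0]. cdepth y \<le> 6" using CC0_elem[OF c(2)] by auto
  then show "cdepth c \<le> 7" using c(1) cdepth_Disj_le by fastforce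
qed

lemma CC_size: "\<forall>c\<in>set (CC n). csize c \<le> (BB + 21) * (n + 1) ^ 3"
proof
  fix c assume "c \<in> set (CC n)"
  then obtain c0 where c: "c = Disj [ERRc n, c0]" "c0 \<in> set (CC0 n)" by (auto simp: CC_def)
  have "csize c = Suc (csize (ERRc n) + csize c0)" using c by simp
  moreover have "csize (ERRc n) \<le> 20 * (n + 1)" by (rule ERRc_bounds(2))
  moreover have "csize c0 \<le> BB * (n + 1) ^ 3" using CC0_elem[OF c(2)] by blast
  moreover have "20 * (n + 1) + 1 \<le> 21 * (n + 1) ^ 3"
  proof -
    have "n + 1 \<le> (n + 1) ^ 3" by (simp add: power3_eq_cube)
    then have "21 * (n + 1) \<le> 21 * (n + 1) ^ 3" by (rule mult_le_mono2)
    moreover have "20 * (n + 1) + 1 \<le> 21 * (n + 1)" by simp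
    ultimately show ?thesis by (rule le_trans[rotated])
  qed
  ultimately show "csize c \<le> (BB + 21) * (n + 1) ^ 3" by (simp add: algebra_simps)
qed

lemma pow_bound: "3 * (2 ^ n + i) + 2 < (2::nat) ^ (n + i + 3)"
proof -
  define A where "A = (2::nat) ^ n"
  define B where "B = (2::nat) ^ i"
  have A1: "1 \<le> A" by (simp add: A_def)
  have B1: "i + 1 \<le> B" unfolding B_def by (metis less_exp Suc_leI Suc_eq_plus1)
  have ab1: "A \<le> A * B" using B1 by simp
  have ab2: "B \<le> A * B" using A1 by simp
  have e2: "(2::nat) ^ (n + i + 3) = 8 * (A * B)" by (simp add: A_def B_def power_add)
  have e1: "3 * (2 ^ n + i) + 2 = 3 * A + 3 * i + 2" by (simp add: A_def)
  show ?thesis unfolding e1 e2 using ab1 ab2 B1 by linarith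
qed

lemma len_sd_Y: "length (sd_code (3 * (2 ^ n + i) + k)) \<le> (2 * i + 8) * (n + 1)" if "k \<le> 2"
proof -
  have "3 * (2 ^ n + i) + k < 2 ^ (n + i + 3)" using pow_bound[of n i] that by linarith
  then have "length (nat_bits (3 * (2 ^ n + i) + k)) \<le> n + i + 3" by (rule length_nat_bits_less)
  then have "length (sd_code (3 * (2 ^ n + i) + k)) \<le> 2 * (n + i + 4)" by simp
  also have "\<dots> \<le> (2 * i + 8) * (n + 1)" by (simp add: algebra_simps)
  finally show ?thesis .
qed

definition w :: "'a letter \<Rightarrow> nat" where
  "w a = (case a of Cst g \<Rightarrow> length (sd_code (3 * elem_code G g))
     | Var i \<Rightarrow> if i = 0 then KK else 2 * i + 8 | IVar i \<Rightarrow> if i = 0 then cG * KK else 2 * i + 8)"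

lemma len_cb: "length (cb n a) \<le> w a * (n + 1)"
proof (cases a)
  case (Cst g) then show ?thesis by (simp add: cb_def w_def)
next
  case (Var i)
  show ?thesis
  proof (cases "i = 0")
    case True then show ?thesis using Var by (simp add: cb_def w_def length_CTA)
  next
    case False then show ?thesis using Var len_sd_Y[of 1 n i] by (simp add: cb_def w_def)
  qed
next
  case (IVar i)
  show ?thesis
  proof (cases "i = 0")
    case True
    have "(cG - 1) * (KK * n) \<le> cG * (KK * n)" by (rule mult_le_mono1) simp
    also have "\<dots> \<le> cG * KK * (n + 1)" by simp
    finally show ?thesis using IVar True by (simp add: cb_def w_def length_CTA length_concat_replicate)
  next
    case False then show ?thesis using IVar len_sd_Y[of 2 n i] by (simp add: cb_def w_def)
  qed
qed

lemma sum_list_mult_const': "sum_list (map (\<lambda>x. f x * (c::nat)) xs) = sum_list (map f xs) * c"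
  by (induction xs) (auto simp: algebra_simps)

lemma CC_len: "length (CC n) \<le> (sum_list (map w \<beta>) + cG * KK) * (n + 1)"
proof -
  have "length (concat (map (cb n) \<beta>)) = sum_list (map (\<lambda>a. length (cb n a)) \<beta>)"
    by (simp add: length_concat comp_def)
  also have "\<dots> \<le> sum_list (map (\<lambda>a. w a * (n + 1)) \<beta>)" by (rule sum_list_mono) (rule len_cb)
  also have "\<dots> = sum_list (map w \<beta>) * (n + 1)" by (rule sum_list_mult_const')
  finally have a: "length (concat (map (cb n) \<beta>)) \<le> sum_list (map w \<beta>) * (n + 1)" .
  have b: "length (concat (replicate cG (CTA tr KK Lm PP n))) \<le> cG * KK * (n + 1)"
    by (simp add: length_concat_replicate length_CTA)
  show ?thesis using a b by (simp add: CC_def CC0_def algebra_simps)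
qed


definition "cQc m = inv_into (carrier Q) (elem_code Q) (m div 3)"

lemma gQ: "group Q" using nrm normal.factorgroup_is_group by blast

lemma cQc_props:
  assumes "m div 3 < cQ"
  shows "cQc m \<in> carrier Q" "rep (cQc m) \<in> carrier G" "elem_code G (rep (cQc m)) < cG"
    "H #>\<^bsub>G\<^esub> rep (cQc m) = cQc m"
proof -
  have "m div 3 \<in> elem_code Q ` carrier Q" using assms bijQ by (auto simp: bij_betw_def)
  then show c: "cQc m \<in> carrier Q" unfolding cQc_def by (rule inv_into_into)
  then show r: "rep (cQc m) \<in> carrier G" using rep_props by blast
  then show "elem_code G (rep (cQc m)) < cG" using bijG by (auto simp: bij_betw_def)
  show "H #>\<^bsub>G\<^esub> rep (cQc m) = cQc m" using rep_props c by blast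
qed

lemma cm_zero:
  assumes "m mod 3 = 0" "m div 3 < cQ"
  shows "cm m = 3 * elem_code G (rep (cQc m))"
proof -
  have "m div 3 < cG" using assms cQ_le by linarith
  then have "m < 3 * cG" using assms by linarith
  then show ?thesis using assms by (simp add: cm_def cQc_def)
qed

lemma dec_G_const: "g \<in> carrier G \<Longrightarrow> dec G (3 * elem_code G g) = Cst g"
  using dec_letter_num(1)[OF fin, of "Cst g"] by (simp add: expr_over_def)

lemma valid12: "validM M (3 * x + 1)" "validM M (3 * x + 2)" by (simp_all add: validM_def)

lemma dec_var1: "dec M (3 * k + 1) = Var k" by (simp add: dec_def)
lemma dec_var2: "dec M (3 * k + 2) = IVar k" by (simp add: dec_def)
lemma dec_var1'[simp]: "dec M (Suc (3 * k)) = Var k" by (simp add: dec_def)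
lemma dec_var2'[simp]: "dec M (Suc (Suc (3 * k))) = IVar k" by (simp add: dec_def)

lemma validQG: "validM G (cm m) \<longleftrightarrow> validM Q m"
proof (cases "m mod 3 = 0")
  case True
  show ?thesis
  proof (cases "m div 3 < cQ")
    case t2: True
    then show ?thesis using cm_zero[OF True t2] cQc_props[OF t2] True by (simp add: validM_def cQ_def cG_def[symmetric])
  next
    case False
    have nq: "\<not> validM Q m" using False True by (simp add: validM_def cQ_def)
    have "\<not> validM G (cm m)"
    proof (cases "m < 3 * cG")
      case True
      then have "cm m = 3 * cG" using \<open>m mod 3 = 0\<close> False by (simp add: cm_def)
      then show ?thesis by (simp add: validM_def cG_def)
    next
      case f3: False
      then have "cm m = m" by (simp add: cm_def)
      moreover have "cG \<le> m div 3" using f3 by linarith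
      ultimately show ?thesis using \<open>m mod 3 = 0\<close> by (simp add: validM_def cG_def)
    qed
    then show ?thesis using nq by simp
  qed
next
  case False
  then have "cm m = m" by (simp add: cm_def)
  then show ?thesis using False by (simp add: validM_def)
qed

lemma valid_pad: "k \<in> set (padn m) \<Longrightarrow> validM G k"
proof -
  assume "k \<in> set (padn m)"
  then have "k \<in> {1, 2, 4, 5}" using set_padnums unfolding padn_def by blast
  then show ?thesis by (auto simp: validM_def)
qed

lemma set_trn: "set (trn ns) = (\<Union>m\<in>set ns. insert (cm m) (set (padn m)))"
  by (auto simp: trn_def)

lemma valid_trn: "(\<forall>k\<in>set (trn ns). validM G k) \<longleftrightarrow> (\<forall>m\<in>set ns. validM Q m)"
  using valid_pad validQG by (auto simp: set_trn)

lemma set_bp: "a \<in> set \<beta> \<Longrightarrow> k \<in> set (bp n ns a) \<Longrightarrow> k \<in> set (trn ns) \<or> validM G k"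
proof (cases a)
  case (Cst g)
  assume "a \<in> set \<beta>" "k \<in> set (bp n ns a)"
  then have "g \<in> carrier G" "k = 3 * elem_code G g" using eo Cst by (auto simp: expr_over_def bp_def)
  then show ?thesis using bijG by (auto simp: validM_def bij_betw_def cG_def[symmetric])
next
  case (Var i)
  assume k: "k \<in> set (bp n ns a)"
  show ?thesis
  proof (cases "i = 0")
    case True then show ?thesis using k Var by (simp add: bp_def)
  next
    case False
    then have "k = 3 * (2 ^ n + i) + 1" using k Var by (simp add: bp_def)
    then show ?thesis using valid12(1) by blast
  qed
next
  case (IVar i)
  assume k: "k \<in> set (bp n ns a)"
  show ?thesis
  proof (cases "i = 0")
    case True then show ?thesis using k IVar by (simp add: bp_def)
  next
    case False
    then have "k = 3 * (2 ^ n + i) + 2" using k IVar by (simp add: bp_def)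
    then show ?thesis using valid12(2) by blast
  qed
qed

lemma valid_Out: "(\<forall>k\<in>set (Out n ns). validM G k) \<longleftrightarrow> (\<forall>m\<in>set ns. validM Q m)"
proof -
  have "set (trn ns) \<subseteq> set (Out n ns)" using cG_pos by (auto simp: Out_def)
  moreover have "k \<in> set (Out n ns) \<Longrightarrow> k \<in> set (trn ns) \<or> validM G k" for k
    using set_bp by (auto simp: Out_def split: if_splits)
  ultimately show ?thesis using valid_trn by blast
qed

abbreviation "ev \<sigma> ks \<equiv> eval_expr G \<sigma> (map (dec G) ks)"

lemma eo_valid: "\<forall>k\<in>set ks. validM G k \<Longrightarrow> expr_over G (map (dec G) ks)"
  using expr_over_map_dec[OF fin] by blast

lemma ev_closed: "assignment G \<sigma> \<Longrightarrow> \<forall>k\<in>set ks. validM G k \<Longrightarrow> ev \<sigma> ks \<in> carrier G"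
  using group.eval_closed[OF grp] eo_valid by blast

lemma ev_app: "assignment G \<sigma> \<Longrightarrow> \<forall>k\<in>set ks. validM G k \<Longrightarrow> \<forall>k\<in>set ls. validM G k \<Longrightarrow>
   ev \<sigma> (ks @ ls) = ev \<sigma> ks \<otimes>\<^bsub>G\<^esub> ev \<sigma> ls"
  using group.eval_append[OF grp] eo_valid by simp

lemma ev_rep: "assignment G \<sigma> \<Longrightarrow> \<forall>k\<in>set ks. validM G k \<Longrightarrow>
   ev \<sigma> (concat (replicate j ks)) = ev \<sigma> ks [^]\<^bsub>G\<^esub> j"
  using group.eval_pow[OF grp] eo_valid by (simp add: map_concat_replicate)

lemma ev_pairs: "assignment G \<sigma> \<Longrightarrow> ev \<sigma> (concat (replicate k [3 * j + 1, 3 * j + 2])) = \<one>\<^bsub>G\<^esub>"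
proof (induction k)
  case 0 then show ?case by simp
next
  case (Suc k)
  have s: "\<sigma> j \<in> carrier G" using Suc.prems by (simp add: assignment_def)
  have "ev \<sigma> (concat (replicate (Suc k) [3 * j + 1, 3 * j + 2]))
     = \<sigma> j \<otimes>\<^bsub>G\<^esub> (inv\<^bsub>G\<^esub> (\<sigma> j) \<otimes>\<^bsub>G\<^esub> ev \<sigma> (concat (replicate k [3 * j + 1, 3 * j + 2])))"
    by (simp add: dec_var1 dec_var2)
  also have "\<dots> = \<one>\<^bsub>G\<^esub>" using Suc s grp by (simp add: group.r_inv group.is_monoid monoid.l_one
     monoid.m_assoc[symmetric] group.inv_closed)
  finally show ?case .
qed

lemma ev_pad: "assignment G \<sigma> \<Longrightarrow> ev \<sigma> (padn m) = \<one>\<^bsub>G\<^esub>"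
proof -
  assume a: "assignment G \<sigma>"
  obtain A B where p: "padn m = concat (replicate A [1, 2]) @ concat (replicate B [4, 5])"
    unfolding padn_def padnums_def by blast
  have e1: "[1, 2] = [3 * 0 + 1, 3 * 0 + 2::nat]" by simp
  have e2: "[4, 5] = [3 * 1 + 1, 3 * 1 + 2::nat]" by simp
  have v: "\<forall>k\<in>set (concat (replicate r [3 * j + 1, 3 * j + 2])). validM G k" for r j
    using valid12 by auto
  have "ev \<sigma> (padn m) = ev \<sigma> (concat (replicate A [3 * 0 + 1, 3 * 0 + 2]))
      \<otimes>\<^bsub>G\<^esub> ev \<sigma> (concat (replicate B [3 * 1 + 1, 3 * 1 + 2]))"
    unfolding p e1 e2 by (rule ev_app[OF a v v])
  also have "\<dots> = \<one>\<^bsub>G\<^esub>" unfolding ev_pairs[OF a] using grp by (simp add: group.is_monoid monoid.l_one)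
  finally show ?thesis .
qed

definition "hq a = H #>\<^bsub>G\<^esub> a"

lemma hom_hq: "group_hom G Q hq"
  unfolding group_hom_def group_hom_axioms_def hq_def
  using grp gQ normal.r_coset_hom_Mod[OF nrm] by blast

lemma ev_trn_hom:
  assumes "\<forall>m\<in>set ns. validM Q m" "assignment G \<sigma>"
  shows "hq (ev \<sigma> (trn ns)) = eval_expr Q (\<lambda>i. hq (\<sigma> i)) (map (dec Q) ns)"
  using assms(1)
proof (induction ns)
  case Nil
  then show ?case using group_hom.hom_one[OF hom_hq] by (simp add: trn_def)
next
  case (Cons m ns)
  have vm: "validM Q m" and vns: "\<forall>m\<in>set ns. validM Q m" using Cons.prems by auto
  have vcm: "validM G (cm m)" using vm validQG by blast
  have vt: "\<forall>k\<in>set (trn ns). validM G k" using vns valid_trn by blast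
  have vp: "\<forall>k\<in>set (padn m). validM G k" using valid_pad by blast
  define l where "l = eval_letter G \<sigma> (dec G (cm m))"
  have lc: "l \<in> carrier G" unfolding l_def
    using group.eval_letter_closed[OF grp assms(2) letter_num_dec(2)[OF fin vcm]] .
  have tc: "ev \<sigma> (trn ns) \<in> carrier G" using ev_closed[OF assms(2) vt] .
  have "ev \<sigma> (trn (m # ns)) = ev \<sigma> ([cm m] @ padn m @ trn ns)" by (simp add: trn_def)
  also have "\<dots> = l \<otimes>\<^bsub>G\<^esub> (ev \<sigma> (padn m) \<otimes>\<^bsub>G\<^esub> ev \<sigma> (trn ns))"
    using ev_app[OF assms(2)] vcm vp vt by (simp add: l_def)
  also have "\<dots> = l \<otimes>\<^bsub>G\<^esub> ev \<sigma> (trn ns)" using ev_pad[OF assms(2)] tc grp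
    by (simp add: group.is_monoid monoid.l_one)
  finally have e: "ev \<sigma> (trn (m # ns)) = l \<otimes>\<^bsub>G\<^esub> ev \<sigma> (trn ns)" .
  have hl: "hq l = eval_letter Q (\<lambda>i. hq (\<sigma> i)) (dec Q m)"
  proof (cases "m mod 3 = 0")
    case True
    then have t2: "m div 3 < cQ" using vm by (simp add: validM_def cQ_def)
    have "dec G (cm m) = Cst (rep (cQc m))" using cm_zero[OF True t2] cQc_props[OF t2] dec_G_const by simp
    moreover have "dec Q m = Cst (cQc m)" using True by (simp add: dec_def cQc_def)
    ultimately show ?thesis using cQc_props[OF t2] by (simp add: l_def hq_def)
  next
    case False
    then have cmm: "cm m = m" by (simp add: cm_def)
    show ?thesis
    proof (cases "m mod 3 = 1")
      case True
      then show ?thesis using cmm by (simp add: l_def dec_def)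
    next
      case f2: False
      then have "dec G m = IVar (m div 3)" "dec Q m = IVar (m div 3)" using False by (auto simp: dec_def)
      moreover have "\<sigma> (m div 3) \<in> carrier G" using assms(2) by (simp add: assignment_def)
      ultimately show ?thesis using cmm group_hom.hom_inv[OF hom_hq] by (simp add: l_def)
    qed
  qed
  have "hq (ev \<sigma> (trn (m # ns))) = hq l \<otimes>\<^bsub>Q\<^esub> hq (ev \<sigma> (trn ns))"
    unfolding e using group_hom.hom_mult[OF hom_hq lc tc] .
  then show ?case using hl Cons.IH[OF vns] by simp
qed

lemma sd_le_cms: "m \<in> set ns \<Longrightarrow> length (sd_code m) \<le> length (cms ns)"
  by (induction ns) auto

lemma trn_vars: "k \<in> set (trn ns) \<Longrightarrow> k mod 3 \<noteq> 0 \<Longrightarrow> k div 3 < 2 ^ length (cms ns)"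
proof -
  assume k: "k \<in> set (trn ns)" "k mod 3 \<noteq> 0"
  then obtain m where m: "m \<in> set ns" "k = cm m \<or> k \<in> set (padn m)" by (auto simp: set_trn)
  have l: "length (sd_code m) \<le> length (cms ns)" using sd_le_cms[OF m(1)] .
  show ?thesis
  proof (cases "k = cm m")
    case True
    then have "cm m = m" using cm_cases[of m] k(2) by metis
    then have "k = m" using True by simp
    have "k < 2 ^ length (nat_bits m)" using less_pow_nat_bits \<open>k = m\<close> by simp
    also have "\<dots> \<le> 2 ^ length (cms ns)" using l by (intro power_increasing) auto
    finally show ?thesis by linarith
  next
    case False
    then have "k \<in> {1, 2, 4, 5}" using m(2) set_padnums by (auto simp: padn_def)
    then have "k div 3 \<le> 1" by auto
    moreover have "(2::nat) \<le> 2 ^ length (cms ns)"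
    proof -
      have "1 \<le> length (cms ns)" using l by simp
      then show ?thesis using power_increasing[of 1 "length (cms ns)" "2::nat"] by simp
    qed
    ultimately show ?thesis by linarith
  qed
qed

lemma ev_trn_cong:
  assumes "\<forall>i < 2 ^ length (cms ns). \<sigma> i = \<sigma>' i"
  shows "ev \<sigma> (trn ns) = ev \<sigma>' (trn ns)"
proof (rule eval_cong, intro allI impI)
  fix i assume "Var i \<in> set (map (dec G) (trn ns)) \<or> IVar i \<in> set (map (dec G) (trn ns))"
  then obtain k where k: "k \<in> set (trn ns)" "dec G k = Var i \<or> dec G k = IVar i" by auto
  then have "k mod 3 \<noteq> 0" "i = k div 3" by (auto simp: dec_def split: if_splits)
  then show "\<sigma> i = \<sigma>' i" using trn_vars[OF k(1)] assms by simp
qed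

lemma pow_cG: "x \<in> carrier G \<Longrightarrow> x [^]\<^bsub>G\<^esub> cG = \<one>\<^bsub>G\<^esub>"
  using group.pow_order_eq_1[OF grp] by (simp add: order_def cG_def)

lemma ev_bp:
  assumes "\<forall>m\<in>set ns. validM Q m" "assignment G \<sigma>" "expr_over G [a]"
  defines "t \<equiv> ev \<sigma> (trn ns)"
  shows "ev \<sigma> (bp n ns a) = eval_letter G (\<lambda>j. if j = 0 then t else \<sigma> (2 ^ n + j)) a"
proof -
  have vt: "\<forall>k\<in>set (trn ns). validM G k" using assms(1) valid_trn by blast
  have tc: "t \<in> carrier G" using ev_closed[OF assms(2) vt] t_def by simp
  show ?thesis
  proof (cases a)
    case (Cst g)
    then have "g \<in> carrier G" using assms(3) by (simp add: expr_over_def)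
    then show ?thesis using Cst dec_G_const grp by (simp add: bp_def group.is_monoid monoid.r_one)
  next
    case (Var i)
    show ?thesis
    proof (cases "i = 0")
      case True then show ?thesis using Var t_def by (simp add: bp_def)
    next
      case False
      have sc: "\<sigma> (2 ^ n + i) \<in> carrier G" using assms(2) by (simp add: assignment_def)
      have b: "bp n ns a = [3 * (2 ^ n + i) + 1]" using Var False by (simp add: bp_def)
      have "ev \<sigma> (bp n ns a) = eval_letter G \<sigma> (Var (2 ^ n + i)) \<otimes>\<^bsub>G\<^esub> \<one>\<^bsub>G\<^esub>"
        by (simp only: b list.map eval_expr.simps dec_var1)
      then show ?thesis using Var False grp sc by (simp add: group.is_monoid monoid.r_one)
    qed
  next
    case (IVar i)
    show ?thesis
    proof (cases "i = 0")
      case True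
      have "ev \<sigma> (concat (replicate (cG - 1) (trn ns))) = t [^]\<^bsub>G\<^esub> (cG - 1)"
        using ev_rep[OF assms(2) vt] t_def by simp
      moreover have "inv\<^bsub>G\<^esub> t = t [^]\<^bsub>G\<^esub> (cG - 1)"
      proof (rule group.inv_equality[OF grp])
        have "t [^]\<^bsub>G\<^esub> (cG - 1) \<otimes>\<^bsub>G\<^esub> t = t [^]\<^bsub>G\<^esub> Suc (cG - 1)"
          using tc grp by (simp add: group.is_monoid monoid.nat_pow_Suc)
        also have "Suc (cG - 1) = cG" using cG_pos by simp
        finally show "t [^]\<^bsub>G\<^esub> (cG - 1) \<otimes>\<^bsub>G\<^esub> t = \<one>\<^bsub>G\<^esub>" using pow_cG[OF tc] by simp
        show "t \<in> carrier G" by (rule tc)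
        show "t [^]\<^bsub>G\<^esub> (cG - 1) \<in> carrier G" using tc grp by (simp add: group.is_monoid monoid.nat_pow_closed)
      qed
      ultimately show ?thesis using IVar True by (simp add: bp_def)
    next
      case False
      have sc: "\<sigma> (2 ^ n + i) \<in> carrier G" using assms(2) by (simp add: assignment_def)
      have b: "bp n ns a = [3 * (2 ^ n + i) + 2]" using IVar False by (simp add: bp_def)
      have "ev \<sigma> (bp n ns a) = eval_letter G \<sigma> (IVar (2 ^ n + i)) \<otimes>\<^bsub>G\<^esub> \<one>\<^bsub>G\<^esub>"
        by (simp only: b list.map eval_expr.simps dec_var2)
      then show ?thesis using IVar False grp sc by (simp add: group.is_monoid monoid.r_one group.inv_closed)
    qed
  qed
qed

lemma valid_bp: "\<forall>m\<in>set ns. validM Q m \<Longrightarrow> a \<in> set \<beta> \<Longrightarrow> \<forall>k\<in>set (bp n ns a). validM G k"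
  using set_bp valid_trn by blast

lemma ev_Out:
  assumes "\<forall>m\<in>set ns. validM Q m" "assignment G \<sigma>"
  shows "ev \<sigma> (Out n ns) = eval_expr G (\<lambda>j. if j = 0 then ev \<sigma> (trn ns) else \<sigma> (2 ^ n + j)) \<beta>"
proof -
  define \<tau> where "\<tau> = (\<lambda>j. if j = 0 then ev \<sigma> (trn ns) else \<sigma> (2 ^ n + j))"
  have vt: "\<forall>k\<in>set (trn ns). validM G k" using assms(1) valid_trn by blast
  have tc: "ev \<sigma> (trn ns) \<in> carrier G" using ev_closed[OF assms(2) vt] .
  have gen: "set \<beta>' \<subseteq> set \<beta> \<Longrightarrow> ev \<sigma> (concat (map (bp n ns) \<beta>')) = eval_expr G \<tau> \<beta>'" for \<beta>'
  proof (induction \<beta>')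
    case Nil then show ?case by simp
  next
    case (Cons a \<beta>')
    have a: "a \<in> set \<beta>" using Cons.prems by simp
    have eoa: "expr_over G [a]" using eo a by (auto simp: expr_over_def)
    have v1: "\<forall>k\<in>set (bp n ns a). validM G k" using valid_bp[OF assms(1) a] .
    have v2: "\<forall>k\<in>set (concat (map (bp n ns) \<beta>')). validM G k" using valid_bp[OF assms(1)] Cons.prems by auto
    have "ev \<sigma> (concat (map (bp n ns) (a # \<beta>'))) = ev \<sigma> (bp n ns a) \<otimes>\<^bsub>G\<^esub> ev \<sigma> (concat (map (bp n ns) \<beta>'))"
      using ev_app[OF assms(2) v1 v2] by simp
    also have "\<dots> = eval_letter G \<tau> a \<otimes>\<^bsub>G\<^esub> eval_expr G \<tau> \<beta>'"
      using ev_bp[OF assms(1) assms(2) eoa] Cons by (simp add: \<tau>_def)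
    finally show ?case by simp
  qed
  have v1: "\<forall>k\<in>set (concat (map (bp n ns) \<beta>)). validM G k" using valid_bp[OF assms(1)] by auto
  have v2: "\<forall>k\<in>set (concat (replicate cG (trn ns))). validM G k" using vt by auto
  have "ev \<sigma> (Out n ns) = ev \<sigma> (concat (map (bp n ns) \<beta>)) \<otimes>\<^bsub>G\<^esub> ev \<sigma> (concat (replicate cG (trn ns)))"
    unfolding Out_def using ev_app[OF assms(2) v1 v2] .
  also have "ev \<sigma> (concat (replicate cG (trn ns))) = \<one>\<^bsub>G\<^esub>"
    using ev_rep[OF assms(2) vt] pow_cG[OF tc] by simp
  also have "ev \<sigma> (concat (map (bp n ns) \<beta>)) = eval_expr G \<tau> \<beta>" using gen by simp
  finally show ?thesis
    using group.eval_closed[OF grp, of \<tau> \<beta>] eo tc assms(2) grp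
    by (simp add: \<tau>_def assignment_def group.is_monoid monoid.r_one)
qed

lemma AC0_CC: "AC0_computable (\<lambda>x. map (ceval x) (CC (length x)))"
  by (rule AC0I[OF _ _ _]) (use CC_depth CC_len CC_size in blast)+



lemma aQ_hq: "assignment G \<sigma> \<Longrightarrow> assignment Q (\<lambda>i. hq (\<sigma> i))"
  by (auto simp: assignment_def hq_def carrier_FactGroup)

lemma sem:
  assumes v: "\<forall>m\<in>set ns. validM Q m"
  shows "map (dec Q) ns \<in> EQN_ID Q \<longleftrightarrow> map (dec G) (Out (length (cms ns)) ns) \<in> EQN_ID G"
proof -
  define n where "n = length (cms ns)"
  have vO: "\<forall>k\<in>set (Out n ns). validM G k" using valid_Out v by blast
  have eQ: "expr_over Q (map (dec Q) ns)" using expr_over_map_dec[OF finQ v] .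
  have eG: "expr_over G (map (dec G) (Out n ns))" using eo_valid[OF vO] .
  have vt: "\<forall>k\<in>set (trn ns). validM G k" using v valid_trn by blast
  have "map (dec Q) ns \<in> EQN_ID Q \<longleftrightarrow> map (dec G) (Out n ns) \<in> EQN_ID G"
  proof
    assume idQ: "map (dec Q) ns \<in> EQN_ID Q"
    have "\<forall>\<sigma>. assignment G \<sigma> \<longrightarrow> ev \<sigma> (Out n ns) = \<one>\<^bsub>G\<^esub>"
    proof (intro allI impI)
      fix \<sigma> assume a: "assignment G \<sigma>"
      define t where "t = ev \<sigma> (trn ns)"
      have tc: "t \<in> carrier G" using ev_closed[OF a vt] t_def by simp
      have "eval_expr Q (\<lambda>i. hq (\<sigma> i)) (map (dec Q) ns) = \<one>\<^bsub>Q\<^esub>"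
        using idQ aQ_hq[OF a] by (simp add: EQN_ID_def)
      then have "hq t = H" using ev_trn_hom[OF v a] t_def by simp
      then have tH: "t \<in> H" using group.coset_join1[OF grp _ tc subH] by (simp add: hq_def)
      then have P: "\<forall>\<sigma>'. assignment G \<sigma>' \<longrightarrow> \<sigma>' 0 = t \<longrightarrow> eval_expr G \<sigma>' \<beta> = \<one>\<^bsub>G\<^esub>"
        using Hdef by blast
      define \<tau> where "\<tau> = (\<lambda>j. if j = 0 then t else \<sigma> (2 ^ n + j))"
      have a\<tau>: "assignment G \<tau>" using a tc by (simp add: assignment_def \<tau>_def)
      have e: "eval_expr G \<tau> \<beta> = \<one>\<^bsub>G\<^esub>" using P a\<tau> by (simp add: \<tau>_def)
      have "ev \<sigma> (Out n ns) = eval_expr G \<tau> \<beta>" using ev_Out[OF v a] unfolding \<tau>_def t_def .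
      then show "ev \<sigma> (Out n ns) = \<one>\<^bsub>G\<^esub>" using e by simp
    qed
    then show "map (dec G) (Out n ns) \<in> EQN_ID G" using eG by (simp add: EQN_ID_def)
  next
    assume idG: "map (dec G) (Out n ns) \<in> EQN_ID G"
    have "\<forall>\<rho>. assignment Q \<rho> \<longrightarrow> eval_expr Q \<rho> (map (dec Q) ns) = \<one>\<^bsub>Q\<^esub>"
    proof (intro allI impI)
      fix \<rho> assume a\<rho>: "assignment Q \<rho>"
      define \<sigma>0 where "\<sigma>0 = (\<lambda>i. rep (\<rho> i))"
      have a0: "assignment G \<sigma>0" using a\<rho> rep_props by (auto simp: assignment_def \<sigma>0_def)
      have h\<rho>: "(\<lambda>i. hq (\<sigma>0 i)) = \<rho>" using a\<rho> rep_props by (auto simp: assignment_def \<sigma>0_def hq_def)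
      define t0 where "t0 = ev \<sigma>0 (trn ns)"
      have t0c: "t0 \<in> carrier G" using ev_closed[OF a0 vt] t0_def by simp
      have P: "\<forall>\<sigma>'. assignment G \<sigma>' \<longrightarrow> \<sigma>' 0 = t0 \<longrightarrow> eval_expr G \<sigma>' \<beta> = \<one>\<^bsub>G\<^esub>"
      proof (intro allI impI)
        fix \<sigma>' assume a': "assignment G \<sigma>'" and s0: "\<sigma>' 0 = t0"
        define \<sigma> where "\<sigma> = (\<lambda>i. if i < 2 ^ n then \<sigma>0 i else \<sigma>' (i - 2 ^ n))"
        have a\<sigma>: "assignment G \<sigma>" using a0 a' by (simp add: assignment_def \<sigma>_def)
        have "ev \<sigma> (trn ns) = ev \<sigma>0 (trn ns)" by (rule ev_trn_cong) (simp add: \<sigma>_def n_def)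
        then have tt: "ev \<sigma> (trn ns) = t0" using t0_def by simp
        have "(\<lambda>j. if j = 0 then ev \<sigma> (trn ns) else \<sigma> (2 ^ n + j)) = \<sigma>'"
          using tt s0 by (auto simp: \<sigma>_def)
        then have "ev \<sigma> (Out n ns) = eval_expr G \<sigma>' \<beta>" using ev_Out[OF v a\<sigma>] by simp
        moreover have "ev \<sigma> (Out n ns) = \<one>\<^bsub>G\<^esub>" using idG a\<sigma> by (simp add: EQN_ID_def)
        ultimately show "eval_expr G \<sigma>' \<beta> = \<one>\<^bsub>G\<^esub>" by simp
      qed
      have "t0 \<in> H" using t0c P Hdef by blast
      then have "hq t0 = H" using group.coset_join2[OF grp t0c subH] by (simp add: hq_def)
      then show "eval_expr Q \<rho> (map (dec Q) ns) = \<one>\<^bsub>Q\<^esub>" using ev_trn_hom[OF v a0] t0_def h\<rho> by simp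
    qed
    then show "map (dec Q) ns \<in> EQN_ID Q" using eQ by (simp add: EQN_ID_def)
  qed
  then show ?thesis using n_def by simp
qed

lemma reduction: "AC0_many_one_reducible (EQN_ID_lang Q) (EQN_ID_lang G)"
  unfolding AC0_many_one_reducible_def
proof (intro exI conjI allI)
  show "AC0_computable (\<lambda>x. map (ceval x) (CC (length x)))" by (rule AC0_CC)
  fix x :: "bool list"
  show "x \<in> EQN_ID_lang Q \<longleftrightarrow> map (ceval x) (CC (length x)) \<in> EQN_ID_lang G"
  proof (cases "\<exists>ns. x = cms ns")
    case True
    then obtain ns where x: "x = cms ns" by blast
    have fx: "map (ceval x) (CC (length x)) = cms (Out (length x) ns)" using CC_ok[OF x] .
    show ?thesis
    proof (cases "\<forall>m\<in>set ns. validM Q m")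
      case v: True
      have "x \<in> EQN_ID_lang Q \<longleftrightarrow> map (dec Q) ns \<in> EQN_ID Q" using memb[OF finQ, of ns] v x by simp
      also have "\<dots> \<longleftrightarrow> map (dec G) (Out (length x) ns) \<in> EQN_ID G" using sem[OF v] x by simp
      also have "\<dots> \<longleftrightarrow> cms (Out (length x) ns) \<in> EQN_ID_lang G"
        using memb[OF fin, of "Out (length x) ns"] valid_Out v by simp
      finally show ?thesis using fx by simp
    next
      case False
      then have "\<not> (\<forall>k\<in>set (Out (length x) ns). validM G k)" using valid_Out by blast
      then have "cms (Out (length x) ns) \<notin> EQN_ID_lang G" using memb[OF fin] by blast
      moreover have "x \<notin> EQN_ID_lang Q" using memb[OF finQ, of ns] False x by blast
      ultimately show ?thesis using fx by simp
    qed
  next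
    case False
    then have err: "ERR x" using ERR_iff by blast
    have "x \<noteq> []" using False by (metis concat.simps(1) list.simps(8))
    then have L: "1 \<le> length (CC0 (length x))" using CC0_len_pos by (simp add: Suc_le_eq)
    have fx: "map (ceval x) (CC (length x)) = replicate (length (CC0 (length x))) True" using CC_err[OF err] .
    have nA: "x \<notin> EQN_ID_lang Q" using lang_range False by blast
    have nB: "replicate (length (CC0 (length x))) True \<notin> EQN_ID_lang G"
    proof
      assume "replicate (length (CC0 (length x))) True \<in> EQN_ID_lang G"
      then obtain ms where e: "replicate (length (CC0 (length x))) True = cms ms" using lang_range by blast
      then have "ms \<noteq> []" using L by auto
      then obtain m where m: "m \<in> set ms" by (cases ms) auto
      have "False \<in> set (sd_code m)" by (simp add: sd_code_def)
      then have "False \<in> set (cms ms)" using m by auto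
      then show False using e by (metis in_set_replicate)
    qed
    show ?thesis using nA nB fx by simp
  qed
qed

end


theorem lemma2p7:
  fixes G :: "('a, 'b) monoid_scheme" and H :: "'a set"
  assumes "group G"
    and "finite (carrier G)"
    and "H \<lhd> G"
    and "atomically_universally_definable G H"
  shows "AC0_many_one_reducible (EQN_ID_lang (G Mod H)) (EQN_ID_lang G)"
proof -
  obtain \<beta> where b: "expr_over G \<beta>"
    "H = {g \<in> carrier G. \<forall>\<sigma>. assignment G \<sigma> \<longrightarrow> \<sigma> 0 = g \<longrightarrow> eval_expr G \<sigma> \<beta> = \<one>\<^bsub>G\<^esub>}"
    using assms(4) unfolding atomically_universally_definable_def by blast
  have r: "red G H \<beta>" unfolding red_def using assms(1-3) b by blast
  interpret red G H \<beta> by (rule r)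
  show ?thesis by (rule reduction)
qed


end
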